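(* Let $m\in\mathbb{N}$ and let $T$ be a $G$-spaced star with center $r$, with space $V_r$ and basis $B_r$ of cardinality $k$, and leaves $[m]$ with spaces $V_v$ ($v\in[m]$). Let $V=K[G]^n$ for some $n\in\mathbb{N}$ with $n>k$, and let $B=\{gf_i: g\in G,\ i\in[n]\}$ where $f_i$ is the $i$-th standard basis vector of $K[G]^n$. Let $T_m$ be the $G$-spaced star with the same center $(V_r,B_r)$ and leaves $[m]$, each leaf carrying $V$ with basis $B$, and let $\mathcal{X}_m=\mathcal{X}(T_m)$. If $\mathcal{X}_m$ is defined by polynomials of degree at most $D$, then so is $\mathcal{X}(T)$.
   Context: $G$ is a finite Abelian group, $K$ an infinite field over which every finite-dimensional $G$-representation splits into one-dimensional irreducibles; $K[G]$ is the regular representation, with $G$ acting on $K[G]^n$ diagonally. A $G$-spaced star with center $r$ and leaves $[m]$ assigns to each vertex $v$ a finite-dimensional $G$-representation $V_v$ with a distinguished basis $B_v$ permuted by $G$ (and the symmetric bilinear form making $B_v$ orthonormal). $L(T)=\bigotimes_{v\in[m]}V_v$. A $G$-representation of $T$ is a tuple of $G$-invariant elements $A_{rv}=\sum_{b\in B_r}b\otimes a_{b,v}\in V_r\otimes V_v$, $v\in[m]$; the equivariant model $\mathcal{X}(T)\subseteq L(T)$ is the Zariski closure of the set of all tensors $\sum_{b\in B_r}\bigotimes_{v\in[m]}a_{b,v}$. *)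

theory Defs
  imports "HOL-Algebra.Group_Action" "HOL-Library.FuncSet"
begin

definition monoms :: "'i set \<Rightarrow> ('i \<Rightarrow> nat) set" where
  "monoms I = {\<alpha>. \<forall>i. i \<notin> I \<longrightarrow> \<alpha> i = 0}"

definition is_mpoly :: "'i set \<Rightarrow> (('i \<Rightarrow> nat) \<Rightarrow> 'k::comm_ring_1) \<Rightarrow> bool" where
  "is_mpoly I p \<longleftrightarrow> finite {\<alpha>. p \<alpha> \<noteq> 0} \<and> (\<forall>\<alpha>. p \<alpha> \<noteq> 0 \<longrightarrow> \<alpha> \<in> monoms I)"

definition mpoly_deg_le :: "'i set \<Rightarrow> nat \<Rightarrow> (('i \<Rightarrow> nat) \<Rightarrow> 'k::comm_ring_1) \<Rightarrow> bool" where
  "mpoly_deg_le I D p \<longleftrightarrow> is_mpoly I p \<and> (\<forall>\<alpha>. p \<alpha> \<noteq> 0 \<longrightarrow> sum \<alpha> I \<le> D)"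

definition mpoly_eval :: "'i set \<Rightarrow> (('i \<Rightarrow> nat) \<Rightarrow> 'k::comm_ring_1) \<Rightarrow> ('i \<Rightarrow> 'k) \<Rightarrow> 'k" where
  "mpoly_eval I p x = (\<Sum>\<alpha>\<in>{\<alpha>. p \<alpha> \<noteq> 0}. p \<alpha> * (\<Prod>i\<in>I. x i ^ \<alpha> i))"

definition aff_space :: "'i set \<Rightarrow> ('i \<Rightarrow> 'k::zero) set" where
  "aff_space I = {x. \<forall>i. i \<notin> I \<longrightarrow> x i = 0}"

definition zero_set :: "'i set \<Rightarrow> (('i \<Rightarrow> nat) \<Rightarrow> 'k::comm_ring_1) set \<Rightarrow> ('i \<Rightarrow> 'k) set" where
  "zero_set I P = {x \<in> aff_space I. \<forall>p\<in>P. mpoly_eval I p x = 0}"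

definition zariski_closure :: "'i set \<Rightarrow> ('i \<Rightarrow> 'k::comm_ring_1) set \<Rightarrow> ('i \<Rightarrow> 'k) set" where
  "zariski_closure I S =
     \<Inter> {zero_set I P | P. (\<forall>p\<in>P. is_mpoly I p) \<and> S \<subseteq> zero_set I P}"

definition defined_by_deg_le :: "'i set \<Rightarrow> ('i \<Rightarrow> 'k::comm_ring_1) set \<Rightarrow> nat \<Rightarrow> bool" where
  "defined_by_deg_le I X D \<longleftrightarrow>
     (\<exists>P. (\<forall>p\<in>P. mpoly_deg_le I D p) \<and> X = zero_set I P)"

text \<open>Each vertex v carries the permutation representation V_v = K^{B_v} of a finite G-set B_v.
The center has G-set Br with action phir; leaf v < m has G-set Bl v with action phil v.
L(T) = tensor product of the V_v (v in [m] = {..<m}) is K^(PiE {..<m} Bl).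
A G-representation of T is a family A v :: Br x Bl v -> K of G-invariant elements of
V_r (x) V_v, i.e. A v (g.b) (g.c) = A v b c; the associated tensor has coordinate
(sum over b in Br of prod over v<m of A v b (c v)) at the basis tensor c.\<close>

definition star_tensors ::
  "('g, 'z) monoid_scheme \<Rightarrow> 'c set \<Rightarrow> ('g \<Rightarrow> 'c \<Rightarrow> 'c) \<Rightarrow> nat \<Rightarrow> (nat \<Rightarrow> 'b set)
     \<Rightarrow> (nat \<Rightarrow> 'g \<Rightarrow> 'b \<Rightarrow> 'b) \<Rightarrow> ((nat \<Rightarrow> 'b) \<Rightarrow> 'k::comm_ring_1) set" where
  "star_tensors G Br phir m Bl phil =
     {(\<lambda>c. if c \<in> Pi\<^sub>E {..<m} Bl then (\<Sum>b\<in>Br. \<Prod>v<m. A v b (c v)) else 0) | A.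
        \<forall>v<m. \<forall>g\<in>carrier G. \<forall>b\<in>Br. \<forall>c\<in>Bl v.
           A v (phir g b) (phil v g c) = A v b c}"

definition equivariant_model ::
  "('g, 'z) monoid_scheme \<Rightarrow> 'c set \<Rightarrow> ('g \<Rightarrow> 'c \<Rightarrow> 'c) \<Rightarrow> nat \<Rightarrow> (nat \<Rightarrow> 'b set)
     \<Rightarrow> (nat \<Rightarrow> 'g \<Rightarrow> 'b \<Rightarrow> 'b) \<Rightarrow> ((nat \<Rightarrow> 'b) \<Rightarrow> 'k::comm_ring_1) set" where
  "equivariant_model G Br phir m Bl phil =
     zariski_closure (Pi\<^sub>E {..<m} Bl) (star_tensors G Br phir m Bl phil)"

text \<open>Leaf space K[G]^n with basis {g f_i}: basis elements are pairs (g, i), g in G, i < n,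
with G acting by left multiplication on the first component.\<close>

definition regn_basis :: "('g, 'z) monoid_scheme \<Rightarrow> nat \<Rightarrow> ('g \<times> nat) set" where
  "regn_basis G n = carrier G \<times> {..<n}"

definition regn_action :: "('g, 'z) monoid_scheme \<Rightarrow> 'g \<Rightarrow> 'g \<times> nat \<Rightarrow> 'g \<times> nat" where
  "regn_action G g p = (g \<otimes>\<^bsub>G\<^esub> fst p, snd p)"

definition is_mat_rep :: "('g, 'z) monoid_scheme \<Rightarrow> nat \<Rightarrow> ('g \<Rightarrow> nat \<Rightarrow> nat \<Rightarrow> 'k::field) \<Rightarrow> bool" where
  "is_mat_rep G n \<rho> \<longleftrightarrow>
     (\<forall>g\<in>carrier G. \<forall>h\<in>carrier G. \<forall>i<n. \<forall>j<n.
        \<rho> (g \<otimes>\<^bsub>G\<^esub> h) i j = (\<Sum>l<n. \<rho> g i l * \<rho> h l j)) \<and>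
     (\<forall>i<n. \<forall>j<n. \<rho> \<one>\<^bsub>G\<^esub> i j = (if i = j then 1 else 0))"

text \<open>K^n splits as a direct sum of one-dimensional subrepresentations: there is a basis
v_0..v_{n-1} (linearly independent n vectors) each spanning a G-stable line.\<close>
definition splits_1dim :: "('g, 'z) monoid_scheme \<Rightarrow> nat \<Rightarrow> ('g \<Rightarrow> nat \<Rightarrow> nat \<Rightarrow> 'k::field) \<Rightarrow> bool" where
  "splits_1dim G n \<rho> \<longleftrightarrow>
     (\<exists>w :: nat \<Rightarrow> nat \<Rightarrow> 'k.
        (\<forall>c. (\<forall>i<n. (\<Sum>j<n. c j * w j i) = 0) \<longrightarrow> (\<forall>j<n. c j = 0)) \<and>
        (\<forall>j<n. \<forall>g\<in>carrier G. \<exists>e. \<forall>i<n. (\<Sum>l<n. \<rho> g i l * w j l) = e * w j i))"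

end

theory Submission
  imports Defs "Jordan_Normal_Form.Determinant"
begin

definition mono_ev :: "'i set \<Rightarrow> ('i \<Rightarrow> nat) \<Rightarrow> ('i \<Rightarrow> 'k::comm_ring_1) \<Rightarrow> 'k" where
  "mono_ev I \<beta> x = (\<Prod>i\<in>I. x i ^ \<beta> i)"

definition pfl :: "'i set \<Rightarrow> nat \<Rightarrow> (('i \<Rightarrow> 'k::comm_ring_1) \<Rightarrow> 'k) \<Rightarrow> bool" where
  "pfl I d f \<longleftrightarrow> (\<exists>L. (\<forall>(c,\<beta>)\<in>set L. \<beta> \<in> monoms I \<and> sum \<beta> I \<le> d) \<and>
      (\<forall>x. f x = sum_list (map (\<lambda>(c,\<beta>). c * mono_ev I \<beta> x) L)))"

lemma pfl_const: "pfl I d (\<lambda>x. c)"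
  unfolding pfl_def
  by (rule exI[of _ "[(c, \<lambda>_. 0)]"]) (auto simp: monoms_def mono_ev_def)

lemma pfl_var: fixes I :: "'i set"
  assumes "finite I" "i \<in> I" "1 \<le> d" shows "pfl I d (\<lambda>x::'i\<Rightarrow>'k::comm_ring_1. x i)"
proof -
  let ?b = "\<lambda>j. if j = i then 1 else (0::nat)"
  have s: "sum ?b I = 1" using assms by (simp add: sum.delta)
  have m: "mono_ev I ?b x = x i" for x :: "'i \<Rightarrow> 'k"
  proof -
    have "mono_ev I ?b x = (\<Prod>j\<in>I. if j = i then x j else 1)"
      unfolding mono_ev_def by (rule prod.cong) auto
    also have "\<dots> = x i" using assms by (simp add: prod.delta)
    finally show ?thesis .
  qed
  show ?thesis unfolding pfl_def
    by (rule exI[of _ "[(1, ?b)]"]) (use assms s in \<open>auto simp: monoms_def m\<close>)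
qed

lemma pfl_mono: "pfl I d f \<Longrightarrow> d \<le> d' \<Longrightarrow> pfl I d' f"
  unfolding pfl_def by (fastforce)

lemma pfl_add: "pfl I d f \<Longrightarrow> pfl I d g \<Longrightarrow> pfl I d (\<lambda>x. f x + g x)"
  unfolding pfl_def
  apply (elim exE conjE)
  subgoal for L1 L2 by (rule exI[of _ "L1 @ L2"]) auto
  done

lemma mono_ev_add: "mono_ev I (\<lambda>i. a i + b i) x = mono_ev I a x * mono_ev I b x"
  unfolding mono_ev_def by (simp add: power_add prod.distrib)

lemma sum_list_concat_mult:
  fixes L1 L2 :: "('k::comm_ring_1 \<times> ('i \<Rightarrow> nat)) list"
  shows "sum_list (map (\<lambda>(c,\<beta>). c * mono_ev I \<beta> x)
     (concat (map (\<lambda>(c,\<beta>). map (\<lambda>(c',\<beta>'). (c*c', \<lambda>i. \<beta> i + \<beta>' i)) L2) L1)))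
   = sum_list (map (\<lambda>(c,\<beta>). c * mono_ev I \<beta> x) L1) *
     sum_list (map (\<lambda>(c,\<beta>). c * mono_ev I \<beta> x) L2)"
proof (induction L1)
  case Nil then show ?case by simp
next
  case (Cons p L1)
  obtain c \<beta> where p: "p = (c,\<beta>)" by force
  have "sum_list (map (\<lambda>(c,\<beta>). c * mono_ev I \<beta> x) (map (\<lambda>(c',\<beta>'). (c*c', \<lambda>i. \<beta> i + \<beta>' i)) L2))
      = sum_list (map (\<lambda>q. (c * mono_ev I \<beta> x) * (case q of (c',\<beta>') \<Rightarrow> c' * mono_ev I \<beta>' x)) L2)"
    by (induction L2) (auto simp: mono_ev_add algebra_simps)
  also have "\<dots> = (c * mono_ev I \<beta> x) * sum_list (map (\<lambda>(c,\<beta>). c * mono_ev I \<beta> x) L2)"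
    by (simp add: sum_list_const_mult)
  finally show ?case using Cons p by (simp add: algebra_simps)
qed

lemma pfl_mult: "pfl I d1 f \<Longrightarrow> pfl I d2 g \<Longrightarrow> pfl I (d1 + d2) (\<lambda>x. f x * g x)"
  unfolding pfl_def
  apply (elim exE conjE)
  subgoal for L1 L2
    apply (rule exI[of _ "concat (map (\<lambda>(c,\<beta>). map (\<lambda>(c',\<beta>'). (c*c', \<lambda>i. \<beta> i + \<beta>' i)) L2) L1)"])
    apply (intro conjI)
    subgoal by (fastforce simp: monoms_def sum.distrib intro: add_mono)
    subgoal by (simp add: sum_list_concat_mult)
    done
  done

lemma pfl_sum: "finite S \<Longrightarrow> (\<And>s. s \<in> S \<Longrightarrow> pfl I d (f s)) \<Longrightarrow> pfl I d (\<lambda>x. \<Sum>s\<in>S. f s x)"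
proof (induction S rule: finite_induct)
  case empty then show ?case using pfl_const[of I d 0] by simp
next
  case (insert a S) then show ?case by (simp add: pfl_add)
qed

lemma pfl_prod: "finite S \<Longrightarrow> (\<And>s. s \<in> S \<Longrightarrow> pfl I (d s) (f s)) \<Longrightarrow> pfl I (\<Sum>s\<in>S. d s) (\<lambda>x. \<Prod>s\<in>S. f s x)"
proof (induction S rule: finite_induct)
  case empty then show ?case using pfl_const[of I 0 1] by simp
next
  case (insert a S) then show ?case by (simp add: pfl_mult)
qed

lemma pfl_power: "pfl I d f \<Longrightarrow> pfl I (d * a) (\<lambda>x. f x ^ a)"
proof (induction a)
  case 0 then show ?case using pfl_const[of I 0 1] by simp
next
  case (Suc a)
  have "pfl I (d + d * a) (\<lambda>x. f x * f x ^ a)" by (rule pfl_mult[OF Suc.prems Suc.IH[OF Suc.prems]])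
  then show ?case by simp
qed

lemma sum_list_group:
  fixes L :: "('k::comm_ring_1 \<times> ('i \<Rightarrow> nat)) list"
  assumes "finite A" "snd ` set L \<subseteq> A"
  shows "(\<Sum>\<alpha>\<in>A. sum_list (map fst (filter (\<lambda>(c,\<beta>). \<beta> = \<alpha>) L)) * g \<alpha>)
       = sum_list (map (\<lambda>(c,\<beta>). c * g \<beta>) L)"
  using assms(2)
proof (induction L)
  case Nil then show ?case by simp
next
  case (Cons p L)
  obtain c \<beta> where p: "p = (c,\<beta>)" by force
  have b: "\<beta> \<in> A" using Cons.prems p by auto
  have "(\<Sum>\<alpha>\<in>A. sum_list (map fst (filter (\<lambda>(c,\<beta>). \<beta> = \<alpha>) (p # L))) * g \<alpha>)
      = (\<Sum>\<alpha>\<in>A. (if \<beta> = \<alpha> then c * g \<alpha> else 0)) + (\<Sum>\<alpha>\<in>A. sum_list (map fst (filter (\<lambda>(c,\<beta>). \<beta> = \<alpha>) L)) * g \<alpha>)"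
    unfolding sum.distrib[symmetric] by (rule sum.cong) (auto simp: p algebra_simps)
  also have "\<dots> = c * g \<beta> + sum_list (map (\<lambda>(c,\<beta>). c * g \<beta>) L)"
    using Cons b assms(1) by (simp add: sum.delta)
  finally show ?case by (simp add: p)
qed

lemma pfl_mpoly:
  assumes "pfl I d f"
  shows "\<exists>p. mpoly_deg_le I d p \<and> (\<forall>x. mpoly_eval I p x = f x)"
proof -
  obtain L where L: "\<forall>(c,\<beta>)\<in>set L. \<beta> \<in> monoms I \<and> sum \<beta> I \<le> d"
    and f: "\<And>x. f x = sum_list (map (\<lambda>(c,\<beta>). c * mono_ev I \<beta> x) L)"
    using assms unfolding pfl_def by blast
  define p where "p \<alpha> = sum_list (map fst (filter (\<lambda>(c,\<beta>). \<beta> = \<alpha>) L))" for \<alpha>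
  have supp: "{\<alpha>. p \<alpha> \<noteq> 0} \<subseteq> snd ` set L"
  proof
    fix \<alpha> assume "\<alpha> \<in> {\<alpha>. p \<alpha> \<noteq> 0}"
    then have "filter (\<lambda>(c,\<beta>). \<beta> = \<alpha>) L \<noteq> []" unfolding p_def by auto
    then obtain q where "q \<in> set L" "snd q = \<alpha>" by (auto simp: filter_empty_conv)
    then show "\<alpha> \<in> snd ` set L" by force
  qed
  have fin: "finite {\<alpha>. p \<alpha> \<noteq> 0}" using supp finite_subset by blast
  have inm: "\<alpha> \<in> monoms I \<and> sum \<alpha> I \<le> d" if "p \<alpha> \<noteq> 0" for \<alpha>
    using supp that L by fastforce
  have ev: "mpoly_eval I p x = f x" for x
  proof -
    have "mpoly_eval I p x = (\<Sum>\<alpha>\<in>snd ` set L. p \<alpha> * mono_ev I \<alpha> x)"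
      unfolding mpoly_eval_def mono_ev_def
      by (rule sum.mono_neutral_left) (use supp in auto)
    also have "\<dots> = f x" unfolding f p_def
      by (rule sum_list_group) auto
    finally show ?thesis .
  qed
  show ?thesis
    by (rule exI[of _ p]) (use fin inm ev in \<open>auto simp: mpoly_deg_le_def is_mpoly_def\<close>)
qed

lemma mpoly_pfl:
  assumes "mpoly_deg_le J D p" "finite J" "\<And>j. j \<in> J \<Longrightarrow> pfl I 1 (\<lambda>x. F x j)"
  shows "pfl I D (\<lambda>x. mpoly_eval J p (F x))"
proof -
  have fin: "finite {\<alpha>. p \<alpha> \<noteq> 0}" using assms(1) by (simp add: mpoly_deg_le_def is_mpoly_def)
  show ?thesis unfolding mpoly_eval_def
  proof (rule pfl_sum[OF fin])
    fix \<alpha> assume a: "\<alpha> \<in> {\<alpha>. p \<alpha> \<noteq> 0}"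
    then have "sum \<alpha> J \<le> D" using assms(1) by (auto simp: mpoly_deg_le_def)
    have "pfl I (\<Sum>j\<in>J. 1 * \<alpha> j) (\<lambda>x. \<Prod>j\<in>J. F x j ^ \<alpha> j)"
      by (rule pfl_prod[OF assms(2)]) (use assms(3) pfl_power in blast)
    then have "pfl I (0 + sum \<alpha> J) (\<lambda>x. p \<alpha> * (\<Prod>j\<in>J. F x j ^ \<alpha> j))"
      using pfl_mult[OF pfl_const[of I 0 "p \<alpha>"]] by simp
    then show "pfl I D (\<lambda>x. p \<alpha> * (\<Prod>j\<in>J. F x j ^ \<alpha> j))"
      using pfl_mono \<open>sum \<alpha> J \<le> D\<close> by fastforce
  qed
qed

lemma ga_group: "group_action G E \<phi> \<Longrightarrow> group G"
  unfolding group_action_def group_hom_def by auto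

lemma ga_closed: "group_action G E \<phi> \<Longrightarrow> g \<in> carrier G \<Longrightarrow> x \<in> E \<Longrightarrow> \<phi> g x \<in> E"
  using group_action.element_image[of G E \<phi> g x "\<phi> g x"] by simp

lemma ga_bij: "group_action G E \<phi> \<Longrightarrow> g \<in> carrier G \<Longrightarrow> bij_betw (\<phi> g) E E"
  using group_action.bij_prop0[of G E \<phi> g] by (simp add: Bij_def)

lemma ga_one: assumes "group_action G E \<phi>" "x \<in> E" shows "\<phi> \<one>\<^bsub>G\<^esub> x = x"
  using fun_cong[OF group_action.id_eq_one[OF assms(1)], of x] assms(2) by simp

lemma ga_comp: "group_action G E \<phi> \<Longrightarrow> x \<in> E \<Longrightarrow> g \<in> carrier G \<Longrightarrow> h \<in> carrier G \<Longrightarrow>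
   \<phi> (g \<otimes>\<^bsub>G\<^esub> h) x = \<phi> g (\<phi> h x)"
  using group_action.composition_rule[of G E \<phi> x g h] by simp

lemma ga_inv1: assumes a: "group_action G E \<phi>" and x: "x \<in> E" and g: "g \<in> carrier G"
  shows "\<phi> (inv\<^bsub>G\<^esub> g) (\<phi> g x) = x"
proof -
  have G: "group G" by (rule ga_group[OF a])
  have "\<phi> (inv\<^bsub>G\<^esub> g) (\<phi> g x) = \<phi> (inv\<^bsub>G\<^esub> g \<otimes>\<^bsub>G\<^esub> g) x"
    using ga_comp[OF a x group.inv_closed[OF G g] g] by simp
  also have "\<dots> = x" using group.l_inv[OF G g] ga_one[OF a x] by simp
  finally show ?thesis .
qed

lemma ga_inv2: assumes a: "group_action G E \<phi>" and x: "x \<in> E" and g: "g \<in> carrier G"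
  shows "\<phi> g (\<phi> (inv\<^bsub>G\<^esub> g) x) = x"
proof -
  have G: "group G" by (rule ga_group[OF a])
  have "\<phi> g (\<phi> (inv\<^bsub>G\<^esub> g) x) = \<phi> (g \<otimes>\<^bsub>G\<^esub> inv\<^bsub>G\<^esub> g) x"
    using ga_comp[OF a x g group.inv_closed[OF G g]] by simp
  also have "\<dots> = x" using group.r_inv[OF G g] ga_one[OF a x] by simp
  finally show ?thesis .
qed

lemma ga_sum_reindex: "group_action G E \<phi> \<Longrightarrow> g \<in> carrier G \<Longrightarrow> (\<Sum>e\<in>E. f (\<phi> g e)) = (\<Sum>e\<in>E. f e)"
  using sum.reindex_bij_betw[OF ga_bij[of G E \<phi> g], of f] by simp

definition tmap :: "nat \<Rightarrow> (nat \<Rightarrow> 'a set) \<Rightarrow> (nat \<Rightarrow> 'b set) \<Rightarrow> (nat \<Rightarrow> 'b \<Rightarrow> 'a \<Rightarrow> 'k)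
    \<Rightarrow> ((nat \<Rightarrow> 'a) \<Rightarrow> 'k) \<Rightarrow> ((nat \<Rightarrow> 'b) \<Rightarrow> 'k::comm_ring_1)" where
  "tmap m B1 B2 M x = (\<lambda>c'. if c' \<in> Pi\<^sub>E {..<m} B2
      then (\<Sum>c\<in>Pi\<^sub>E {..<m} B1. (\<Prod>v<m. M v (c' v) (c v)) * x c) else 0)"

definition eqv_mats :: "('g,'z) monoid_scheme \<Rightarrow> nat \<Rightarrow> (nat \<Rightarrow> 'a set) \<Rightarrow> (nat \<Rightarrow> 'g \<Rightarrow> 'a \<Rightarrow> 'a)
   \<Rightarrow> (nat \<Rightarrow> 'b set) \<Rightarrow> (nat \<Rightarrow> 'g \<Rightarrow> 'b \<Rightarrow> 'b) \<Rightarrow> (nat \<Rightarrow> 'b \<Rightarrow> 'a \<Rightarrow> 'k) \<Rightarrow> bool" where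
  "eqv_mats G m B1 phi1 B2 phi2 M \<longleftrightarrow> (\<forall>v<m. \<forall>g\<in>carrier G. \<forall>c'\<in>B2 v. \<forall>e\<in>B1 v.
      M v (phi2 v g c') (phi1 v g e) = M v c' e)"

lemma tmap_aff: "tmap m B1 B2 M x \<in> aff_space (Pi\<^sub>E {..<m} B2)"
  unfolding tmap_def aff_space_def by auto

lemma star_aff: "star_tensors G Br phir m B phi \<subseteq> aff_space (Pi\<^sub>E {..<m} B)"
  unfolding star_tensors_def aff_space_def by (clarsimp simp del: PiE_iff)

lemma tmap_coord_pfl:
  assumes "\<And>v. v < m \<Longrightarrow> finite (B1 v)"
  shows "pfl (Pi\<^sub>E {..<m} B1) 1 (\<lambda>x. tmap m B1 B2 M x j)"
proof (cases "j \<in> Pi\<^sub>E {..<m} B2")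
  case True
  have fin: "finite (Pi\<^sub>E {..<m} B1)" by (intro finite_PiE) (auto intro: assms)
  have "pfl (Pi\<^sub>E {..<m} B1) 1 (\<lambda>x. \<Sum>c\<in>Pi\<^sub>E {..<m} B1. (\<Prod>v<m. M v (j v) (c v)) * x c)"
  proof (rule pfl_sum[OF fin])
    fix c assume c: "c \<in> Pi\<^sub>E {..<m} B1"
    have "pfl (Pi\<^sub>E {..<m} B1) (0+1) (\<lambda>x. (\<Prod>v<m. M v (j v) (c v)) * x c)"
      by (rule pfl_mult[OF pfl_const pfl_var[OF fin c]]) simp
    then show "pfl (Pi\<^sub>E {..<m} B1) 1 (\<lambda>x. (\<Prod>v<m. M v (j v) (c v)) * x c)" by simp
  qed
  then show ?thesis using True unfolding tmap_def by simp
next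
  case False then show ?thesis unfolding tmap_def by (simp add: pfl_const)
qed

lemma is_mpoly_deg: "is_mpoly I p \<Longrightarrow> \<exists>D. mpoly_deg_le I D p"
proof -
  assume p: "is_mpoly I p"
  then have fin: "finite {\<alpha>. p \<alpha> \<noteq> 0}" by (simp add: is_mpoly_def)
  show ?thesis
    by (rule exI[of _ "\<Sum>\<alpha>\<in>{\<alpha>. p \<alpha> \<noteq> 0}. sum \<alpha> I"])
      (use p fin in \<open>auto simp: mpoly_deg_le_def intro!: member_le_sum\<close>)
qed

lemma pfl_vanish_closure:
  assumes "pfl I d f" "\<And>t. t \<in> S \<Longrightarrow> f t = 0" "x \<in> zariski_closure I S" "S \<subseteq> aff_space I"
  shows "f x = 0"
proof -
  obtain q where q: "mpoly_deg_le I d q" "\<And>x. mpoly_eval I q x = f x"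
    using pfl_mpoly[OF assms(1)] by blast
  have "S \<subseteq> zero_set I {q}" using assms(2,4) q(2) by (auto simp: zero_set_def)
  moreover have "\<forall>p\<in>{q}. is_mpoly I p" using q(1) by (simp add: mpoly_deg_le_def)
  ultimately have "x \<in> zero_set I {q}" using assms(3) unfolding zariski_closure_def by blast
  then show ?thesis using q(2) by (simp add: zero_set_def)
qed

lemma closure_aff: assumes "S \<subseteq> aff_space I" shows "zariski_closure I S \<subseteq> aff_space I"
proof -
  have z: "zero_set I {} = aff_space I" by (simp add: zero_set_def)
  have "zero_set I {} \<in> {zero_set I P | P. (\<forall>p\<in>P. is_mpoly I p) \<and> S \<subseteq> zero_set I P}"
    using assms z by blast
  then show ?thesis unfolding zariski_closure_def z[symmetric] by (rule Inter_lower)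
qed

lemma closure_sub: "S \<subseteq> aff_space I \<Longrightarrow> S \<subseteq> zariski_closure I S"
  unfolding zariski_closure_def by auto

lemma tmap_star:
  assumes fin1: "\<And>v. v < m \<Longrightarrow> finite (B1 v)"
    and ga1: "\<And>v g. v < m \<Longrightarrow> g \<in> carrier G \<Longrightarrow> bij_betw (phi1 v g) (B1 v) (B1 v)"
    and eq: "eqv_mats G m B1 phi1 B2 phi2 M"
    and t: "t \<in> star_tensors G Br phir m B1 phi1"
  shows "tmap m B1 B2 M t \<in> star_tensors G Br phir m B2 phi2"
proof -
  obtain A where tA: "t = (\<lambda>c. if c \<in> Pi\<^sub>E {..<m} B1 then (\<Sum>b\<in>Br. \<Prod>v<m. A v b (c v)) else 0)"
    and Ainv: "\<forall>v<m. \<forall>g\<in>carrier G. \<forall>b\<in>Br. \<forall>c\<in>B1 v. A v (phir g b) (phi1 v g c) = A v b c"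
    using t unfolding star_tensors_def by blast
  define A' where "A' v b c' = (\<Sum>e\<in>B1 v. M v c' e * A v b e)" for v b c'
  have inv': "A' v (phir g b) (phi2 v g c') = A' v b c'"
    if v: "v < m" and g: "g \<in> carrier G" and b: "b \<in> Br" and c': "c' \<in> B2 v" for v g b c'
  proof -
    have "A' v (phir g b) (phi2 v g c') = (\<Sum>e\<in>B1 v. M v (phi2 v g c') (phi1 v g e) * A v (phir g b) (phi1 v g e))"
      unfolding A'_def by (rule sum.reindex_bij_betw[OF ga1[OF v g], symmetric])
    also have "\<dots> = A' v b c'" unfolding A'_def
      by (rule sum.cong) (use eq v g c' Ainv b in \<open>auto simp: eqv_mats_def\<close>)
    finally show ?thesis .
  qed
  have "tmap m B1 B2 M t = (\<lambda>c'. if c' \<in> Pi\<^sub>E {..<m} B2 then (\<Sum>b\<in>Br. \<Prod>v<m. A' v b (c' v)) else 0)"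
  proof
    fix c'
    show "tmap m B1 B2 M t c' = (if c' \<in> Pi\<^sub>E {..<m} B2 then (\<Sum>b\<in>Br. \<Prod>v<m. A' v b (c' v)) else 0)"
    proof (cases "c' \<in> Pi\<^sub>E {..<m} B2")
      case True
      have "tmap m B1 B2 M t c' = (\<Sum>c\<in>Pi\<^sub>E {..<m} B1. (\<Prod>v<m. M v (c' v) (c v)) * (\<Sum>b\<in>Br. \<Prod>v<m. A v b (c v)))"
        using True unfolding tmap_def tA by (auto intro!: sum.cong)
      also have "\<dots> = (\<Sum>b\<in>Br. \<Sum>c\<in>Pi\<^sub>E {..<m} B1. \<Prod>v<m. M v (c' v) (c v) * A v b (c v))"
        unfolding sum_distrib_left prod.distrib by (rule sum.swap)
      also have "\<dots> = (\<Sum>b\<in>Br. \<Prod>v<m. A' v b (c' v))"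
      proof (rule sum.cong[OF refl])
        fix b
        show "(\<Sum>c\<in>Pi\<^sub>E {..<m} B1. \<Prod>v<m. M v (c' v) (c v) * A v b (c v)) = (\<Prod>v<m. A' v b (c' v))"
          unfolding A'_def
          by (rule prod_sum_PiE[of "{..<m}" B1 "\<lambda>v e. M v (c' v) e * A v b e", symmetric]) (auto intro: fin1)
      qed
      finally show ?thesis using True by simp
    qed (simp add: tmap_def)
  qed
  then show ?thesis unfolding star_tensors_def using inv' by blast
qed

lemma tmap_model:
  fixes B1 :: "nat \<Rightarrow> 'a set" and B2 :: "nat \<Rightarrow> 'b set" and x :: "(nat \<Rightarrow> 'a) \<Rightarrow> 'k::comm_ring_1"
    and M :: "nat \<Rightarrow> 'b \<Rightarrow> 'a \<Rightarrow> 'k"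
  assumes fin1: "\<And>v. v < m \<Longrightarrow> finite (B1 v)"
    and fin2: "\<And>v. v < m \<Longrightarrow> finite (B2 v)"
    and ga1: "\<And>v g. v < m \<Longrightarrow> g \<in> carrier G \<Longrightarrow> bij_betw (phi1 v g) (B1 v) (B1 v)"
    and eq: "eqv_mats G m B1 phi1 B2 phi2 M"
    and x: "x \<in> equivariant_model G Br phir m B1 phi1"
  shows "tmap m B1 B2 M x \<in> equivariant_model G Br phir m B2 phi2"
proof -
  let ?I1 = "Pi\<^sub>E {..<m} B1" and ?I2 = "Pi\<^sub>E {..<m} B2"
  have fI2: "finite ?I2" by (intro finite_PiE) (auto intro: fin2)
  show ?thesis unfolding equivariant_model_def zariski_closure_def
  proof (rule InterI, clarify)
    fix P :: "(((nat \<Rightarrow> 'b) \<Rightarrow> nat) \<Rightarrow> 'k) set" assume P: "\<forall>p\<in>P. is_mpoly ?I2 p"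
      and S2: "star_tensors G Br phir m B2 phi2 \<subseteq> zero_set ?I2 P"
    have "mpoly_eval ?I2 p (tmap m B1 B2 M x) = 0" if p: "p \<in> P" for p
    proof -
      obtain D where D: "mpoly_deg_le ?I2 D p" using is_mpoly_deg P p by blast
      have pf: "pfl ?I1 D (\<lambda>x. mpoly_eval ?I2 p (tmap m B1 B2 M x))"
        by (rule mpoly_pfl[OF D fI2 tmap_coord_pfl[OF fin1]])
      show ?thesis
      proof (rule pfl_vanish_closure[OF pf _ _ star_aff])
        fix t :: "(nat \<Rightarrow> 'a) \<Rightarrow> 'k" assume "t \<in> star_tensors G Br phir m B1 phi1"
        then have "tmap m B1 B2 M t \<in> star_tensors G Br phir m B2 phi2"
          using tmap_star[of m B1 G phi1 B2 phi2 M t Br phir] fin1 ga1 eq by blast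
        then show "mpoly_eval ?I2 p (tmap m B1 B2 M t) = 0" using S2 p by (auto simp: zero_set_def)
      qed (use x in \<open>simp add: equivariant_model_def\<close>)
    qed
    then show "tmap m B1 B2 M x \<in> zero_set ?I2 P" using tmap_aff by (auto simp: zero_set_def)
  qed
qed

lemma regn_bij: assumes G: "group G" and g: "g \<in> carrier G"
  shows "bij_betw (regn_action G g) (regn_basis G n) (regn_basis G n)"
proof (rule bij_betw_byWitness[where f'="regn_action G (inv\<^bsub>G\<^esub> g)"])
  have M: "monoid G" by (rule group.is_monoid[OF G])
  have ig: "inv\<^bsub>G\<^esub> g \<in> carrier G" by (rule group.inv_closed[OF G g])
  show "\<forall>a\<in>regn_basis G n. regn_action G (inv\<^bsub>G\<^esub> g) (regn_action G g a) = a"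
    using G g ig by (auto simp: regn_action_def regn_basis_def monoid.m_assoc[OF M, symmetric]
        group.l_inv monoid.l_one[OF M])
  show "\<forall>a'\<in>regn_basis G n. regn_action G g (regn_action G (inv\<^bsub>G\<^esub> g) a') = a'"
    using G g ig by (auto simp: regn_action_def regn_basis_def monoid.m_assoc[OF M, symmetric]
        group.r_inv monoid.l_one[OF M])
  show "regn_action G g ` regn_basis G n \<subseteq> regn_basis G n"
    using G g by (auto simp: regn_action_def regn_basis_def group.is_monoid monoid.m_closed)
  show "regn_action G (inv\<^bsub>G\<^esub> g) ` regn_basis G n \<subseteq> regn_basis G n"
    using G g by (auto simp: regn_action_def regn_basis_def group.is_monoid monoid.m_closed group.inv_closed)
qed

definition gact :: "nat \<Rightarrow> (nat \<Rightarrow> 'g \<Rightarrow> 'b \<Rightarrow> 'b) \<Rightarrow> 'g \<Rightarrow> (nat \<Rightarrow> 'b) \<Rightarrow> (nat \<Rightarrow> 'b)" where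
  "gact m phi g c = (\<lambda>v. if v < m then phi v g (c v) else undefined)"

lemma gact_PiE:
  assumes "\<forall>v<m. \<forall>e\<in>B v. phi v g e \<in> B v" "c \<in> Pi\<^sub>E {..<m} B"
  shows "gact m phi g c \<in> Pi\<^sub>E {..<m} B"
  using assms unfolding gact_def by (auto simp: PiE_iff extensional_def)

lemma star_inv:
  assumes t: "t \<in> star_tensors G Br phir m B phi"
    and gr: "group_action G Br phir"
    and cl: "\<forall>v<m. \<forall>e\<in>B v. phi v g e \<in> B v"
    and g: "g \<in> carrier G" and c: "c \<in> Pi\<^sub>E {..<m} B"
  shows "t (gact m phi g c) = t c"
proof -
  obtain A where tA: "t = (\<lambda>c. if c \<in> Pi\<^sub>E {..<m} B then (\<Sum>b\<in>Br. \<Prod>v<m. A v b (c v)) else 0)"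
    and Ainv: "\<forall>v<m. \<forall>g\<in>carrier G. \<forall>b\<in>Br. \<forall>c\<in>B v. A v (phir g b) (phi v g c) = A v b c"
    using t unfolding star_tensors_def by blast
  have gc: "gact m phi g c \<in> Pi\<^sub>E {..<m} B" by (rule gact_PiE[of m B phi g c, OF cl c])
  have "t (gact m phi g c) = (\<Sum>b\<in>Br. \<Prod>v<m. A v b (phi v g (c v)))"
    using gc unfolding tA by (simp add: gact_def)
  also have "\<dots> = (\<Sum>b\<in>Br. \<Prod>v<m. A v (phir g b) (phi v g (c v)))"
    by (rule ga_sum_reindex[OF gr g, symmetric])
  also have "\<dots> = (\<Sum>b\<in>Br. \<Prod>v<m. A v b (c v))"
    using Ainv g c by (auto intro!: sum.cong prod.cong simp: PiE_iff)
  finally show ?thesis using c unfolding tA by simp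
qed

lemma pfl_diff_var:
  assumes "finite I" "a \<in> I" "b \<in> I"
  shows "pfl I 1 (\<lambda>z::'i \<Rightarrow> 'k::comm_ring_1. z a - z b)"
proof -
  have "pfl I (0+1) (\<lambda>z::'i \<Rightarrow> 'k. (-1) * z b)" by (rule pfl_mult[OF pfl_const pfl_var[OF assms(1,3)]]) simp
  then have "pfl I 1 (\<lambda>z::'i \<Rightarrow> 'k. z a + (-1) * z b)" using pfl_add pfl_var[OF assms(1,2)] by fastforce
  then show ?thesis by simp
qed

lemma model_inv:
  assumes z: "z \<in> equivariant_model G Br phir m B phi"
    and gr: "group_action G Br phir"
    and fin: "\<And>v. v < m \<Longrightarrow> finite (B v)"
    and cl: "\<forall>v<m. \<forall>e\<in>B v. phi v g e \<in> B v"
    and g: "g \<in> carrier G" and c: "c \<in> Pi\<^sub>E {..<m} B"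
  shows "z (gact m phi g c) = z c"
proof -
  have fI: "finite (Pi\<^sub>E {..<m} B)" by (intro finite_PiE) (auto intro: fin)
  have gc: "gact m phi g c \<in> Pi\<^sub>E {..<m} B" by (rule gact_PiE[of m B phi g c, OF cl c])
  have "z (gact m phi g c) - z c = 0"
  proof (rule pfl_vanish_closure[where f="\<lambda>z. z (gact m phi g c) - z c", OF pfl_diff_var[OF fI gc c]])
    fix t assume "t \<in> star_tensors G Br phir m B phi"
    then show "t (gact m phi g c) - t c = 0" using star_inv[of t G Br phir m B phi g c, OF _ gr cl g c] by simp
  qed (use z in \<open>simp_all add: equivariant_model_def star_aff\<close>)
  then show ?thesis by simp
qed

lemma prod_delta_PiE:
  fixes m :: nat
  assumes f: "f \<in> Pi\<^sub>E {..<m} B" and c: "c \<in> Pi\<^sub>E {..<m} B"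
  shows "(\<Prod>v<m. (if f v = c v then 1 else 0)) = (if c = f then (1::'k::comm_ring_1) else 0)"
proof (cases "c = f")
  case True then show ?thesis by simp
next
  case False
  then obtain v where "c v \<noteq> f v" by auto
  then have v: "v < m" using f c by (metis PiE_arb lessThan_iff)
  have "(\<Prod>v<m. (if f v = c v then 1 else 0)) = (0::'k)"
  proof (rule prod_zero)
    show "\<exists>a\<in>{..<m}. (if f a = c a then 1 else 0) = (0::'k)"
      by (rule bexI[of _ v]) (use v \<open>c v \<noteq> f v\<close> in auto)
  qed simp
  then show ?thesis using False by simp
qed

lemma collapse:
  fixes m :: nat
  assumes f: "f \<in> Pi\<^sub>E {..<m} B" and fin: "\<And>v. v < m \<Longrightarrow> finite (B v)"
  shows "(\<Sum>c\<in>Pi\<^sub>E {..<m} B. (\<Prod>v<m. (if f v = c v then 1 else 0)) * x c) = (x f :: 'k::comm_ring_1)"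
proof -
  have fI: "finite (Pi\<^sub>E {..<m} B)" by (intro finite_PiE) (auto intro: fin)
  have "(\<Sum>c\<in>Pi\<^sub>E {..<m} B. (\<Prod>v<m. (if f v = c v then 1 else 0)) * x c)
      = (\<Sum>c\<in>Pi\<^sub>E {..<m} B. (if c = f then x c else 0))"
    by (rule sum.cong) (auto simp: prod_delta_PiE[OF f])
  also have "\<dots> = x f" using fI f by (simp add: sum.delta')
  finally show ?thesis .
qed

lemma pfl_det:
  assumes fI: "finite I" and cc: "\<And>i j. i < N \<Longrightarrow> j < N \<Longrightarrow> cc i j \<in> I"
  shows "pfl I N (\<lambda>z::'i \<Rightarrow> 'k::comm_ring_1. det (mat N N (\<lambda>(i,j). z (cc i j))))"
proof -
  have e: "det (mat N N (\<lambda>(i,j). z (cc i j))) =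
     (\<Sum>p\<in>{p. p permutes {0..<N}}. signof p * (\<Prod>i=0..<N. z (cc i (p i))))" for z :: "'i \<Rightarrow> 'k"
  proof -
    have "det (mat N N (\<lambda>(i,j). z (cc i j))) =
     (\<Sum>p\<in>{p. p permutes {0..<N}}. signof p * (\<Prod>i=0..<N. mat N N (\<lambda>(i,j). z (cc i j)) $$ (i, p i)))"
      by (rule det_def') simp
    also have "\<dots> = (\<Sum>p\<in>{p. p permutes {0..<N}}. signof p * (\<Prod>i=0..<N. z (cc i (p i))))"
      by (rule sum.cong[OF refl], rule arg_cong[where f="\<lambda>t. _ * t"], rule prod.cong[OF refl])
        (auto dest: permutes_in_image)
    finally show ?thesis .
  qed
  have "pfl I N (\<lambda>z::'i \<Rightarrow> 'k. \<Sum>p\<in>{p. p permutes {0..<N}}. signof p * (\<Prod>i=0..<N. z (cc i (p i))))"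
  proof (rule pfl_sum)
    show "finite {p. p permutes {0..<N}}" by (rule finite_permutations) simp
    fix p assume p: "p \<in> {p. p permutes {0..<N}}"
    have "pfl I (\<Sum>i=0..<N. 1) (\<lambda>z::'i \<Rightarrow> 'k. \<Prod>i=0..<N. z (cc i (p i)))"
      by (rule pfl_prod) (use p cc fI in \<open>auto intro!: pfl_var dest: permutes_in_image\<close>)
    then have "pfl I (0 + N) (\<lambda>z::'i \<Rightarrow> 'k. signof p * (\<Prod>i=0..<N. z (cc i (p i))))"
      using pfl_mult[OF pfl_const] by fastforce
    then show "pfl I N (\<lambda>z::'i \<Rightarrow> 'k. signof p * (\<Prod>i=0..<N. z (cc i (p i))))" by simp
  qed
  then show ?thesis by (simp only: e)
qed

lemma det_lowrank:
  fixes P :: "nat \<Rightarrow> 'b \<Rightarrow> 'k::comm_ring_1"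
  assumes fB: "finite B" and card: "card B < N"
  shows "det (mat N N (\<lambda>(i,j). \<Sum>b\<in>B. P i b * Q b j)) = 0"
proof -
  let ?r = "card B"
  obtain en where en: "bij_betw en {..<?r} B"
    using ex_bij_betw_nat_finite[OF fB] by (metis atLeast0LessThan)
  define P' where "P' = mat N N (\<lambda>(i,l). if l < ?r then P i (en l) else 0)"
  define Q' where "Q' = mat N N (\<lambda>(l,j). if l < ?r then Q (en l) j else 0)"
  have cP: "P' \<in> carrier_mat N N" and cQ: "Q' \<in> carrier_mat N N" unfolding P'_def Q'_def by auto
  have prod: "P' * Q' = mat N N (\<lambda>(i,j). \<Sum>b\<in>B. P i b * Q b j)"
  proof (rule eq_matI)
    fix i j assume ij: "i < dim_row (mat N N (\<lambda>(i,j). \<Sum>b\<in>B. P i b * Q b j))"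
      "j < dim_col (mat N N (\<lambda>(i,j). \<Sum>b\<in>B. P i b * Q b j))"
    then have i: "i < N" and j: "j < N" by auto
    have "(P' * Q') $$ (i,j) = (\<Sum>l<N. (if l < ?r then P i (en l) else 0) * (if l < ?r then Q (en l) j else 0))"
      using i j cP cQ unfolding P'_def Q'_def
      by (simp add: scalar_prod_def atLeast0LessThan)
    also have "\<dots> = (\<Sum>l<?r. P i (en l) * Q (en l) j)"
    proof -
      have "(\<Sum>l<N. (if l < ?r then P i (en l) else 0) * (if l < ?r then Q (en l) j else 0))
        = (\<Sum>l<?r. (if l < ?r then P i (en l) else 0) * (if l < ?r then Q (en l) j else 0))"
        by (rule sum.mono_neutral_right) (use card in auto)
      then show ?thesis by simp
    qed
    also have "\<dots> = (\<Sum>b\<in>B. P i b * Q b j)"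
      by (rule sum.reindex_bij_betw[OF en])
    finally show "(P' * Q') $$ (i,j) = mat N N (\<lambda>(i,j). \<Sum>b\<in>B. P i b * Q b j) $$ (i,j)"
      using i j by simp
  qed (auto simp: P'_def Q'_def)
  have "det P' = 0"
  proof -
    have N: "N - 1 < N" using card by auto
    have "det P' = (\<Sum>i<N. P' $$ (i, N-1) * cofactor P' i (N-1))"
      by (rule laplace_expansion_column[OF cP N])
    also have "\<dots> = 0" using card by (auto intro!: sum.neutral simp: P'_def)
    finally show ?thesis .
  qed
  then show ?thesis using det_mult[OF cP cQ] prod by simp
qed

lemma det_mat0: "det (mat 0 0 f) = (1::'k::comm_ring_1)"
  by (simp add: det_def)

lemma schur_det:
  fixes A :: "'k::field mat"
  assumes A: "A \<in> carrier_mat (Suc N) (Suc N)" and a: "A $$ (0,0) \<noteq> 0"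
  shows "det A = A $$ (0,0) * det (mat N N (\<lambda>(i,j). A $$ (Suc i, Suc j) - A $$ (Suc i, 0) * A $$ (0, Suc j) / A $$ (0,0)))"
proof -
  let ?a = "A $$ (0,0)"
  define E where "E = mat (Suc N) (Suc N) (\<lambda>(i,l). (if l = i then 1 else 0) + (if l = 0 \<and> i \<noteq> 0 then - A $$ (i,0) / ?a else 0))"
  have cE: "E \<in> carrier_mat (Suc N) (Suc N)" unfolding E_def by simp
  have dE: "det E = 1"
  proof -
    have "det E = prod_list (diag_mat E)"
      by (rule det_lower_triangular[OF _ cE]) (auto simp: E_def)
    also have "diag_mat E = map (\<lambda>i. 1) [0..<Suc N]"
      unfolding diag_mat_def using cE by (auto simp: E_def)
    also have "prod_list \<dots> = 1" by (simp add: map_replicate_const)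
    finally show ?thesis .
  qed
  define B where "B = E * A"
  have cB: "B \<in> carrier_mat (Suc N) (Suc N)" unfolding B_def using cE A by simp
  have Bij: "B $$ (i,j) = A $$ (i,j) + (if i \<noteq> 0 then - A $$ (i,0) / ?a * A $$ (0,j) else 0)"
    if i: "i < Suc N" and j: "j < Suc N" for i j
  proof -
    have "B $$ (i,j) = (\<Sum>l\<in>{0..<Suc N}. E $$ (i,l) * A $$ (l,j))"
      unfolding B_def using i j cE A by (simp add: scalar_prod_def)
    also have "\<dots> = (\<Sum>l\<in>{0..<Suc N}. (if l = i then A $$ (l,j) else 0) +
        (if l = 0 then (if i \<noteq> 0 then - A $$ (i,0) / ?a * A $$ (l,j) else 0) else 0))"
      by (rule sum.cong) (use i in \<open>auto simp: E_def algebra_simps\<close>)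
    also have "\<dots> = A $$ (i,j) + (if i \<noteq> 0 then - A $$ (i,0) / ?a * A $$ (0,j) else 0)"
      unfolding sum.distrib using i by (simp add: sum.delta)
    finally show ?thesis .
  qed
  have "det B = det A" unfolding B_def using det_mult[OF cE A] dE by simp
  also have "det B = (\<Sum>i<Suc N. B $$ (i,0) * cofactor B i 0)"
    by (rule laplace_expansion_column[OF cB]) simp
  also have "\<dots> = (\<Sum>i<Suc N. if i = 0 then ?a * cofactor B 0 0 else 0)"
    by (rule sum.cong) (use a in \<open>auto simp: Bij\<close>)
  also have "\<dots> = ?a * cofactor B 0 0" by simp
  also have "cofactor B 0 0 = det (mat_delete B 0 0)" by (simp add: cofactor_def)
  also have "mat_delete B 0 0 = mat N N (\<lambda>(i,j). A $$ (Suc i, Suc j) - A $$ (Suc i, 0) * A $$ (0, Suc j) / ?a)"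
  proof (rule eq_matI)
    fix i j assume "i < dim_row (mat N N (\<lambda>(i,j). A $$ (Suc i, Suc j) - A $$ (Suc i, 0) * A $$ (0, Suc j) / ?a))"
      "j < dim_col (mat N N (\<lambda>(i,j). A $$ (Suc i, Suc j) - A $$ (Suc i, 0) * A $$ (0, Suc j) / ?a))"
    then have i: "i < N" and j: "j < N" by auto
    have "mat_delete B 0 0 $$ (i,j) = B $$ (Suc i, Suc j)"
      unfolding mat_delete_def using i j cB by simp
    also have "\<dots> = A $$ (Suc i, Suc j) - A $$ (Suc i, 0) * A $$ (0, Suc j) / ?a"
      using Bij[of "Suc i" "Suc j"] i j by simp
    finally show "mat_delete B 0 0 $$ (i,j) = mat N N (\<lambda>(i,j). A $$ (Suc i, Suc j) - A $$ (Suc i, 0) * A $$ (0, Suc j) / ?a) $$ (i,j)"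
      using i j by simp
  qed (use cB in auto)
  finally show ?thesis by simp
qed

lemma rank_reprod:
  fixes y :: "'c \<Rightarrow> 'r \<Rightarrow> 'k::field"
  assumes fR: "finite R"
    and minors: "\<And>ds cs. (\<forall>i<N. ds i \<in> R) \<Longrightarrow> (\<forall>j<N. cs j \<in> Cs) \<Longrightarrow>
        det (mat N N (\<lambda>(i,j). y (cs j) (ds i))) = 0"
  shows "\<exists>r<N. \<exists>u L. \<forall>C\<in>Cs. \<forall>e\<in>R. y C e = (\<Sum>j<r. (\<Sum>d\<in>R. L j d * y C d) * u j e)"
  using minors
proof (induction N arbitrary: y)
  case 0
  then have "det (mat 0 0 (\<lambda>(i,j). y ((\<lambda>_. undefined) j) ((\<lambda>_. undefined) i))) = 0" by simp
  then show ?case by (simp add: det_mat0)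
next
  case (Suc N)
  show ?case
  proof (cases "\<forall>C\<in>Cs. \<forall>e\<in>R. y C e = 0")
    case True
    then show ?thesis by (intro exI[of _ 0]) auto
  next
    case False
    then obtain C0 d0 where C0: "C0 \<in> Cs" and d0: "d0 \<in> R" and a: "y C0 d0 \<noteq> 0" by blast
    define a where "a = y C0 d0"
    define y' where "y' C e = y C e - y C0 e * y C d0 / a" for C e
    have m': "det (mat N N (\<lambda>(i,j). y' (cs j) (ds i))) = 0"
      if ds: "\<forall>i<N. ds i \<in> R" and cs: "\<forall>j<N. cs j \<in> Cs" for ds cs
    proof -
      define ds' where "ds' i = (if i = 0 then d0 else ds (i - 1))" for i
      define cs' where "cs' j = (if j = 0 then C0 else cs (j - 1))" for j
      let ?A = "mat (Suc N) (Suc N) (\<lambda>(i,j). y (cs' j) (ds' i))"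
      have "det ?A = 0" by (rule Suc.prems) (use ds cs d0 C0 in \<open>auto simp: ds'_def cs'_def\<close>)
      moreover have "det ?A = a * det (mat N N (\<lambda>(i,j). y' (cs j) (ds i)))"
      proof -
        have "det ?A = ?A $$ (0,0) * det (mat N N (\<lambda>(i,j). ?A $$ (Suc i, Suc j) - ?A $$ (Suc i, 0) * ?A $$ (0, Suc j) / ?A $$ (0,0)))"
          by (rule schur_det) (use a in \<open>auto simp: ds'_def cs'_def\<close>)
        also have "mat N N (\<lambda>(i,j). ?A $$ (Suc i, Suc j) - ?A $$ (Suc i, 0) * ?A $$ (0, Suc j) / ?A $$ (0,0))
            = mat N N (\<lambda>(i,j). y' (cs j) (ds i))"
          by (rule eq_matI) (auto simp: ds'_def cs'_def y'_def a_def algebra_simps)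
        finally show ?thesis by (simp add: ds'_def cs'_def a_def)
      qed
      ultimately show ?thesis using a by (simp add: a_def)
    qed
    obtain r' u' L' where r': "r' < N"
      and rep': "\<forall>C\<in>Cs. \<forall>e\<in>R. y' C e = (\<Sum>j<r'. (\<Sum>d\<in>R. L' j d * y' C d) * u' j e)"
      using Suc.IH[of y'] m' by blast
    define u where "u j = (if j < r' then u' j else y C0)" for j
    define L where "L j d = (if j < r' then L' j d - (if d = d0 then (\<Sum>d'\<in>R. L' j d' * y C0 d') / a else 0)
        else (if d = d0 then 1 / a else 0))" for j d
    have lam: "(\<Sum>d\<in>R. L j d * y C d) = (\<Sum>d\<in>R. L' j d * y' C d)" if j: "j < r'" for j C
    proof -
      have "(\<Sum>d\<in>R. L j d * y C d) = (\<Sum>d\<in>R. L' j d * y C d) -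
          (\<Sum>d\<in>R. (if d = d0 then (\<Sum>d'\<in>R. L' j d' * y C0 d') / a * y C d else 0))"
        unfolding sum_subtractf[symmetric] by (rule sum.cong) (use j in \<open>auto simp: L_def algebra_simps\<close>)
      also have "\<dots> = (\<Sum>d\<in>R. L' j d * y C d) - (\<Sum>d'\<in>R. L' j d' * y C0 d') / a * y C d0"
        using fR d0 by (simp add: sum.delta)
      also have "\<dots> = (\<Sum>d\<in>R. L' j d * y' C d)"
        unfolding y'_def by (simp add: algebra_simps sum_subtractf sum_distrib_left sum_distrib_right sum_divide_distrib)
      finally show ?thesis .
    qed
    have lamr: "(\<Sum>d\<in>R. L r' d * y C d) = y C d0 / a" for C
    proof -
      have "(\<Sum>d\<in>R. L r' d * y C d) = (\<Sum>d\<in>R. if d = d0 then y C d / a else 0)"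
        by (rule sum.cong) (auto simp: L_def)
      also have "\<dots> = y C d0 / a" using fR d0 by (simp add: sum.delta)
      finally show ?thesis .
    qed
    have main: "\<forall>C\<in>Cs. \<forall>e\<in>R. y C e = (\<Sum>j<Suc r'. (\<Sum>d\<in>R. L j d * y C d) * u j e)"
    proof (intro ballI)
      fix C e assume C: "C \<in> Cs" and e: "e \<in> R"
      have "(\<Sum>j<Suc r'. (\<Sum>d\<in>R. L j d * y C d) * u j e)
          = (\<Sum>j<r'. (\<Sum>d\<in>R. L' j d * y' C d) * u' j e) + y C d0 / a * y C0 e"
        by (simp add: lam lamr u_def)
      also have "\<dots> = y' C e + y C d0 / a * y C0 e" using rep' C e by simp
      also have "\<dots> = y C e" unfolding y'_def by (simp add: algebra_simps)
      finally show "y C e = (\<Sum>j<Suc r'. (\<Sum>d\<in>R. L j d * y C d) * u j e)" by simp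
    qed
    have "Suc r' < Suc N" using r' by simp
    then show ?thesis using main by blast
  qed
qed

lemma card_nonzero:
  fixes G :: "('g,'z) monoid_scheme"
  assumes G: "group G" and fG: "finite (carrier G)"
    and split: "\<And>d (\<rho> :: 'g \<Rightarrow> nat \<Rightarrow> nat \<Rightarrow> 'k::field). is_mat_rep G d \<rho> \<Longrightarrow> splits_1dim G d \<rho>"
  shows "of_nat (card (carrier G)) \<noteq> (0::'k)"
proof
  assume z: "of_nat (card (carrier G)) = (0::'k)"
  define d where "d = card (carrier G)"
  obtain en where en: "bij_betw en {..<d} (carrier G)"
    using ex_bij_betw_nat_finite[OF fG] unfolding d_def by (metis atLeast0LessThan)
  define idx where "idx = inv_into {..<d} en"
  have en_in: "i < d \<Longrightarrow> en i \<in> carrier G" for i using en by (auto simp: bij_betw_def)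
  have idx_lt: "x \<in> carrier G \<Longrightarrow> idx x < d" for x
    unfolding idx_def using en by (metis bij_betw_def inv_into_into lessThan_iff)
  have en_idx: "x \<in> carrier G \<Longrightarrow> en (idx x) = x" for x
    unfolding idx_def using en by (simp add: bij_betw_def f_inv_into_f)
  have idx_en: "i < d \<Longrightarrow> idx (en i) = i" for i
    unfolding idx_def using en by (simp add: bij_betw_def inv_into_f_f)
  have en_eq: "i < d \<Longrightarrow> j < d \<Longrightarrow> en i = en j \<longleftrightarrow> i = j" for i j
    using en by (metis idx_en)
  have d0: "0 < d" unfolding d_def using fG group.is_monoid[OF G] monoid.one_closed card_gt_0_iff by blast
  have M: "monoid G" by (rule group.is_monoid[OF G])
  define \<rho> where "\<rho> g i j = (if en i = g \<otimes>\<^bsub>G\<^esub> en j then 1 else (0::'k))" for g i j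
  have key: "en l = x \<longleftrightarrow> l = idx x" if "l < d" "x \<in> carrier G" for l x
    using that en_idx idx_en by metis
  have rep: "is_mat_rep G d \<rho>"
    unfolding is_mat_rep_def
  proof (intro conjI ballI allI impI)
    fix g h i j assume g: "g \<in> carrier G" and h: "h \<in> carrier G" and i: "i < d" and j: "j < d"
    have hj: "h \<otimes>\<^bsub>G\<^esub> en j \<in> carrier G" using h en_in[OF j] M by (simp add: monoid.m_closed)
    have "(\<Sum>l<d. \<rho> g i l * \<rho> h l j) = (\<Sum>l<d. if l = idx (h \<otimes>\<^bsub>G\<^esub> en j) then \<rho> (g \<otimes>\<^bsub>G\<^esub> h) i j else 0)"
    proof (rule sum.cong[OF refl])
      fix l assume l: "l \<in> {..<d}"
      show "\<rho> g i l * \<rho> h l j = (if l = idx (h \<otimes>\<^bsub>G\<^esub> en j) then \<rho> (g \<otimes>\<^bsub>G\<^esub> h) i j else 0)"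
        using key[of l "h \<otimes>\<^bsub>G\<^esub> en j"] l hj g h en_in[OF j]
        by (auto simp: \<rho>_def monoid.m_assoc[OF M])
    qed
    also have "\<dots> = \<rho> (g \<otimes>\<^bsub>G\<^esub> h) i j" using idx_lt[OF hj] by simp
    finally show "\<rho> (g \<otimes>\<^bsub>G\<^esub> h) i j = (\<Sum>l<d. \<rho> g i l * \<rho> h l j)" by simp
  next
    fix i j assume i: "i < d" and j: "j < d"
    show "\<rho> \<one>\<^bsub>G\<^esub> i j = (if i = j then 1 else 0)"
      using en_eq[OF i j] en_in[OF j] M by (simp add: \<rho>_def monoid.l_one)
  qed
  obtain w where indep: "\<And>c. (\<forall>i<d. (\<Sum>j<d. c j * w j i) = 0) \<Longrightarrow> (\<forall>j<d. c j = 0)"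
    and eig: "\<And>j g. j < d \<Longrightarrow> g \<in> carrier G \<Longrightarrow> \<exists>e. \<forall>i<d. (\<Sum>l<d. \<rho> g i l * w j l) = e * w j i"
    using split[OF rep] unfolding splits_1dim_def by blast
  define \<sigma> where "\<sigma> g i = idx (inv\<^bsub>G\<^esub> g \<otimes>\<^bsub>G\<^esub> en i)" for g i
  have act: "(\<Sum>l<d. \<rho> g i l * w j l) = w j (\<sigma> g i)" if g: "g \<in> carrier G" and i: "i < d" for g i j
  proof -
    have ig: "inv\<^bsub>G\<^esub> g \<otimes>\<^bsub>G\<^esub> en i \<in> carrier G" using g en_in[OF i] G by (simp add: group.inv_closed monoid.m_closed[OF M])
    have "(\<Sum>l<d. \<rho> g i l * w j l) = (\<Sum>l<d. if l = \<sigma> g i then w j l else 0)"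
    proof (rule sum.cong[OF refl])
      fix l assume l: "l \<in> {..<d}"
      have "en i = g \<otimes>\<^bsub>G\<^esub> en l \<longleftrightarrow> en l = inv\<^bsub>G\<^esub> g \<otimes>\<^bsub>G\<^esub> en i"
        using g en_in[OF i] en_in l G by (auto simp: group.inv_solve_left)
      then show "\<rho> g i l * w j l = (if l = \<sigma> g i then w j l else 0)"
        using key[OF _ ig, of l] l by (auto simp: \<rho>_def \<sigma>_def)
    qed
    also have "\<dots> = w j (\<sigma> g i)" using idx_lt[OF ig] by (simp add: \<sigma>_def)
    finally show ?thesis .
  qed
  have \<sigma>_bij: "bij_betw (\<sigma> g) {..<d} {..<d}" if g: "g \<in> carrier G" for g
  proof (rule bij_betw_byWitness[where f'="\<sigma> (inv\<^bsub>G\<^esub> g)"])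
    have ig: "inv\<^bsub>G\<^esub> g \<in> carrier G" using g G by (simp add: group.inv_closed)
    have c1: "inv\<^bsub>G\<^esub> g \<otimes>\<^bsub>G\<^esub> en i \<in> carrier G" if "i < d" for i using ig en_in[OF that] monoid.m_closed[OF M] by blast
    show "\<forall>a\<in>{..<d}. \<sigma> (inv\<^bsub>G\<^esub> g) (\<sigma> g a) = a"
    proof
      fix a assume a: "a \<in> {..<d}"
      have "\<sigma> (inv\<^bsub>G\<^esub> g) (\<sigma> g a) = idx (inv\<^bsub>G\<^esub> (inv\<^bsub>G\<^esub> g) \<otimes>\<^bsub>G\<^esub> (inv\<^bsub>G\<^esub> g \<otimes>\<^bsub>G\<^esub> en a))"
        unfolding \<sigma>_def using en_idx c1 a by simp
      also have "\<dots> = a" using a g G en_in[of a] idx_en[of a]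
        by (simp add: group.inv_inv monoid.m_assoc[OF M, symmetric] group.r_inv group.inv_closed monoid.l_one[OF M])
      finally show "\<sigma> (inv\<^bsub>G\<^esub> g) (\<sigma> g a) = a" .
    qed
    show "\<forall>a\<in>{..<d}. \<sigma> g (\<sigma> (inv\<^bsub>G\<^esub> g) a) = a"
    proof
      fix a assume a: "a \<in> {..<d}"
      have c2: "inv\<^bsub>G\<^esub> (inv\<^bsub>G\<^esub> g) \<otimes>\<^bsub>G\<^esub> en a \<in> carrier G"
        using g G en_in[of a] a by (simp add: group.inv_inv monoid.m_closed[OF M])
      have "\<sigma> g (\<sigma> (inv\<^bsub>G\<^esub> g) a) = idx (inv\<^bsub>G\<^esub> g \<otimes>\<^bsub>G\<^esub> (inv\<^bsub>G\<^esub> (inv\<^bsub>G\<^esub> g) \<otimes>\<^bsub>G\<^esub> en a))"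
        unfolding \<sigma>_def using en_idx c2 by simp
      also have "\<dots> = a" using a g G en_in[of a] idx_en[of a]
        by (simp add: group.inv_inv monoid.m_assoc[OF M, symmetric] group.l_inv group.inv_closed monoid.l_one[OF M])
      finally show "\<sigma> g (\<sigma> (inv\<^bsub>G\<^esub> g) a) = a" .
    qed
    show "\<sigma> g ` {..<d} \<subseteq> {..<d}" using idx_lt c1 by (auto simp: \<sigma>_def)
    show "\<sigma> (inv\<^bsub>G\<^esub> g) ` {..<d} \<subseteq> {..<d}"
      using idx_lt ig G en_in by (auto simp: \<sigma>_def group.inv_inv monoid.m_closed[OF M])
  qed
  have s0: "(\<Sum>i<d. w j i) = 0" if j: "j < d" for j
  proof (rule ccontr)
    assume ns: "(\<Sum>i<d. w j i) \<noteq> 0"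
    have fix1: "w j (\<sigma> g i) = w j i" if g: "g \<in> carrier G" and i: "i < d" for g i
    proof -
      obtain e where e: "\<forall>i<d. (\<Sum>l<d. \<rho> g i l * w j l) = e * w j i" using eig[OF j g] by blast
      have "(\<Sum>i<d. w j i) = (\<Sum>i<d. w j (\<sigma> g i))"
        using sum.reindex_bij_betw[OF \<sigma>_bij[OF g], of "w j"] by simp
      also have "\<dots> = (\<Sum>i<d. e * w j i)" using e act[OF g] by simp
      also have "\<dots> = e * (\<Sum>i<d. w j i)" by (simp add: sum_distrib_left)
      finally have "e = 1" using ns by simp
      have "w j (\<sigma> g i) = (\<Sum>l<d. \<rho> g i l * w j l)" using act[OF g i] by simp
      also have "\<dots> = e * w j i" by (rule e[rule_format, OF i])
      finally show ?thesis using \<open>e = 1\<close> by simp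
    qed
    have const: "w j i = w j 0" if i: "i < d" for i
    proof -
      let ?g = "en i \<otimes>\<^bsub>G\<^esub> inv\<^bsub>G\<^esub> (en 0)"
      have g: "?g \<in> carrier G" using en_in[OF i] en_in[OF d0] G by (simp add: group.inv_closed monoid.m_closed[OF M])
      have "inv\<^bsub>G\<^esub> ?g \<otimes>\<^bsub>G\<^esub> en i = en 0"
        using en_in[OF i] en_in[OF d0] G
        by (simp add: group.inv_mult_group group.inv_inv group.inv_closed monoid.m_assoc[OF M] group.l_inv monoid.r_one[OF M])
      then have "\<sigma> ?g i = 0" unfolding \<sigma>_def using idx_en[OF d0] by simp
      then show ?thesis using fix1[OF g i] by simp
    qed
    have "(\<Sum>i<d. w j i) = (\<Sum>i<d. w j 0)" by (rule sum.cong[OF refl]) (rule const, simp)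
    also have "\<dots> = of_nat d * w j 0" by simp
    also have "\<dots> = 0" using z by (simp add: d_def)
    finally show False using ns by simp
  qed
  define W where "W = mat d d (\<lambda>(j,i). w j i)"
  have cW: "W \<in> carrier_mat d d" unfolding W_def by simp
  have "det W = 0"
  proof -
    let ?v = "vec d (\<lambda>_. 1::'k)"
    have "?v \<noteq> 0\<^sub>v d" using d0 by (metis index_vec index_zero_vec(1) zero_neq_one)
    moreover have "W *\<^sub>v ?v = 0\<^sub>v d"
      by (rule eq_vecI) (use s0 in \<open>auto simp: W_def scalar_prod_def atLeast0LessThan\<close>)
    moreover have "?v \<in> carrier_vec d" by simp
    ultimately show ?thesis using det_0_iff_vec_prod_zero_field[OF cW] by blast
  qed
  then have "det (transpose_mat W) = 0" using det_transpose[OF cW] by simp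
  then obtain c where c: "c \<in> carrier_vec d" "c \<noteq> 0\<^sub>v d" "transpose_mat W *\<^sub>v c = 0\<^sub>v d"
    using det_0_iff_vec_prod_zero_field[of "transpose_mat W" d] cW by auto
  have "\<forall>i<d. (\<Sum>j<d. c $ j * w j i) = 0"
  proof (intro allI impI)
    fix i assume i: "i < d"
    have "(transpose_mat W *\<^sub>v c) $ i = 0" using c(3) i by simp
    then show "(\<Sum>j<d. c $ j * w j i) = 0"
      using i c(1) by (simp add: W_def scalar_prod_def atLeast0LessThan mult.commute)
  qed
  then have "\<forall>j<d. c $ j = 0" by (rule indep)
  then have "c = 0\<^sub>v d" using c(1) by (intro eq_vecI) auto
  then show False using c(2) by simp
qed

lemma reprod_all:
  fixes x :: "(nat \<Rightarrow> 'b) \<Rightarrow> 'k::comm_ring_1" and m :: nat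
  assumes fin: "\<And>v. v < m \<Longrightarrow> finite (B v)"
    and rep: "\<And>v c'. v < m \<Longrightarrow> c' \<in> Pi\<^sub>E {..<m} B \<Longrightarrow>
        (\<Sum>e\<in>B v. \<pi> v (c' v) e * x (c'(v := e))) = x c'"
    and c': "c' \<in> Pi\<^sub>E {..<m} B"
  shows "(\<Sum>c\<in>Pi\<^sub>E {..<m} B. (\<Prod>v<m. \<pi> v (c' v) (c v)) * x c) = x c'"
proof -
  define f where "f j v c' c = (if v < j then \<pi> v (c' v) (c v) else (if c' v = c v then 1 else (0::'k)))"
    for j v and c' c :: "nat \<Rightarrow> 'b"
  have main: "j \<le> m \<Longrightarrow> \<forall>c'\<in>Pi\<^sub>E {..<m} B. (\<Sum>c\<in>Pi\<^sub>E {..<m} B. (\<Prod>v<m. f j v c' c) * x c) = x c'" for j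
  proof (induction j)
    case 0
    show ?case
    proof
      fix c' assume c': "c' \<in> Pi\<^sub>E {..<m} B"
      have "(\<Sum>c\<in>Pi\<^sub>E {..<m} B. (\<Prod>v<m. f 0 v c' c) * x c)
          = (\<Sum>c\<in>Pi\<^sub>E {..<m} B. (\<Prod>v<m. (if c' v = c v then 1 else 0)) * x c)"
        by (simp add: f_def)
      also have "\<dots> = x c'" by (rule collapse[OF c' fin])
      finally show "(\<Sum>c\<in>Pi\<^sub>E {..<m} B. (\<Prod>v<m. f 0 v c' c) * x c) = x c'" .
    qed
  next
    case (Suc j)
    then have j: "j < m" and IH: "\<forall>c'\<in>Pi\<^sub>E {..<m} B. (\<Sum>c\<in>Pi\<^sub>E {..<m} B. (\<Prod>v<m. f j v c' c) * x c) = x c'"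
      by auto
    show ?case
    proof
      fix c' assume c': "c' \<in> Pi\<^sub>E {..<m} B"
      have ce: "c'(j := e) \<in> Pi\<^sub>E {..<m} B" if "e \<in> B j" for e
        using c' j that by (auto simp: PiE_iff extensional_def)
      have fj: "finite (B j)" by (rule fin[OF j])
      have fI: "finite (Pi\<^sub>E {..<m} B)" by (intro finite_PiE) (auto intro: fin)
      have split1: "(\<Prod>v<m. f j v (c'(j := e)) c) = (if e = c j then 1 else 0) * (\<Prod>v\<in>{..<m} - {j}. f j v c' c)" for e c
      proof -
        have "(\<Prod>v<m. f j v (c'(j := e)) c) = f j j (c'(j := e)) c * (\<Prod>v\<in>{..<m} - {j}. f j v (c'(j := e)) c)"
          by (rule prod.remove) (use j in auto)
        also have "(\<Prod>v\<in>{..<m} - {j}. f j v (c'(j := e)) c) = (\<Prod>v\<in>{..<m} - {j}. f j v c' c)"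
          by (rule prod.cong) (auto simp: f_def)
        also have "f j j (c'(j := e)) c = (if e = c j then 1 else 0)" by (simp add: f_def)
        finally show ?thesis .
      qed
      have split2: "(\<Prod>v<m. f (Suc j) v c' c) = \<pi> j (c' j) (c j) * (\<Prod>v\<in>{..<m} - {j}. f j v c' c)" for c
      proof -
        have "(\<Prod>v<m. f (Suc j) v c' c) = f (Suc j) j c' c * (\<Prod>v\<in>{..<m} - {j}. f (Suc j) v c' c)"
          by (rule prod.remove) (use j in auto)
        also have "(\<Prod>v\<in>{..<m} - {j}. f (Suc j) v c' c) = (\<Prod>v\<in>{..<m} - {j}. f j v c' c)"
          by (rule prod.cong) (auto simp: f_def)
        also have "f (Suc j) j c' c = \<pi> j (c' j) (c j)" by (simp add: f_def)
        finally show ?thesis .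
      qed
      have "(\<Sum>e\<in>B j. \<pi> j (c' j) e * (\<Sum>c\<in>Pi\<^sub>E {..<m} B. (\<Prod>v<m. f j v (c'(j := e)) c) * x c))
          = (\<Sum>c\<in>Pi\<^sub>E {..<m} B. \<Sum>e\<in>B j. \<pi> j (c' j) e * ((\<Prod>v<m. f j v (c'(j := e)) c) * x c))"
        unfolding sum_distrib_left by (rule sum.swap)
      also have "\<dots> = (\<Sum>c\<in>Pi\<^sub>E {..<m} B. (\<Prod>v<m. f (Suc j) v c' c) * x c)"
      proof (rule sum.cong[OF refl])
        fix c assume c: "c \<in> Pi\<^sub>E {..<m} B"
        have cj: "c j \<in> B j" using c j by auto
        have "(\<Sum>e\<in>B j. \<pi> j (c' j) e * ((\<Prod>v<m. f j v (c'(j := e)) c) * x c))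
            = (\<Sum>e\<in>B j. if e = c j then \<pi> j (c' j) e * (\<Prod>v\<in>{..<m} - {j}. f j v c' c) * x c else 0)"
          by (rule sum.cong[OF refl]) (simp add: split1)
        also have "\<dots> = \<pi> j (c' j) (c j) * (\<Prod>v\<in>{..<m} - {j}. f j v c' c) * x c"
          using fj cj by (simp add: sum.delta')
        also have "\<dots> = (\<Prod>v<m. f (Suc j) v c' c) * x c" by (simp add: split2)
        finally show "(\<Sum>e\<in>B j. \<pi> j (c' j) e * ((\<Prod>v<m. f j v (c'(j := e)) c) * x c))
            = (\<Prod>v<m. f (Suc j) v c' c) * x c" .
      qed
      finally have eq: "(\<Sum>c\<in>Pi\<^sub>E {..<m} B. (\<Prod>v<m. f (Suc j) v c' c) * x c)
          = (\<Sum>e\<in>B j. \<pi> j (c' j) e * (\<Sum>c\<in>Pi\<^sub>E {..<m} B. (\<Prod>v<m. f j v (c'(j := e)) c) * x c))" by simp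
      also have "\<dots> = (\<Sum>e\<in>B j. \<pi> j (c' j) e * x (c'(j := e)))"
        by (rule sum.cong[OF refl]) (use IH ce in simp)
      also have "\<dots> = x c'" by (rule rep[OF j c'])
      finally show "(\<Sum>c\<in>Pi\<^sub>E {..<m} B. (\<Prod>v<m. f (Suc j) v c' c) * x c) = x c'" .
    qed
  qed
  have "(\<Sum>c\<in>Pi\<^sub>E {..<m} B. (\<Prod>v<m. f m v c' c) * x c) = x c'" using main[of m] c' by blast
  moreover have "(\<Prod>v<m. f m v c' c) = (\<Prod>v<m. \<pi> v (c' v) (c v))" for c
    by (rule prod.cong) (auto simp: f_def)
  ultimately show ?thesis by simp
qed

locale dsetup =
  fixes G :: "('g,'z) monoid_scheme" and Br :: "'c set" and phir :: "'g \<Rightarrow> 'c \<Rightarrow> 'c"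
    and m :: nat and Bl :: "nat \<Rightarrow> 'b set" and phil :: "nat \<Rightarrow> 'g \<Rightarrow> 'b \<Rightarrow> 'b"
    and k n :: nat and x :: "(nat \<Rightarrow> 'b) \<Rightarrow> 'k::field"
  assumes G: "group G" and fG: "finite (carrier G)" and cardG: "of_nat (card (carrier G)) \<noteq> (0::'k)"
    and fBr: "finite Br" and cBr: "card Br = k" and gar: "group_action G Br phir"
    and fBl: "\<And>v. v < m \<Longrightarrow> finite (Bl v)" and gal: "\<And>v. v < m \<Longrightarrow> group_action G (Bl v) (phil v)"
    and nk: "k < n"
    and xaff: "x \<in> aff_space (Pi\<^sub>E {..<m} Bl)"
    and H: "\<And>M. eqv_mats G m Bl phil (\<lambda>_. regn_basis G n) (\<lambda>_. regn_action G) M \<Longrightarrow>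
        tmap m Bl (\<lambda>_. regn_basis G n) M x \<in>
          equivariant_model G Br phir m (\<lambda>_. regn_basis G n) (\<lambda>_. regn_action G)"
begin

abbreviation "IT \<equiv> Pi\<^sub>E {..<m} Bl"
abbreviation "RB \<equiv> regn_basis G n"
abbreviation "IM \<equiv> Pi\<^sub>E {..<m} (\<lambda>_::nat. RB)"
abbreviation "XM \<equiv> (equivariant_model G Br phir m (\<lambda>_. regn_basis G n) (\<lambda>_. regn_action G)
     :: ((nat \<Rightarrow> 'g \<times> nat) \<Rightarrow> 'k) set)"

lemma Mon: "monoid G" using G by (rule group.is_monoid)

lemma fRB: "finite RB" using fG by (simp add: regn_basis_def)
lemma fIM: "finite IM" using fRB by (intro finite_PiE) auto
lemma fIT: "finite IT" by (intro finite_PiE) (auto intro: fBl)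

lemma RB_cl: "g \<in> carrier G \<Longrightarrow> e \<in> RB \<Longrightarrow> regn_action G g e \<in> RB"
  by (auto simp: regn_action_def regn_basis_def monoid.m_closed[OF Mon])

lemma XM_inv: "z \<in> XM \<Longrightarrow> g \<in> carrier G \<Longrightarrow> c \<in> IM \<Longrightarrow> z (gact m (\<lambda>_. regn_action G) g c) = z c"
  by (rule model_inv[OF _ gar fRB]) (auto intro: RB_cl)

lemma phil_cl: "v < m \<Longrightarrow> g \<in> carrier G \<Longrightarrow> e \<in> Bl v \<Longrightarrow> phil v g e \<in> Bl v"
  using ga_closed[OF gal] by blast

lemma phil_inj: "v < m \<Longrightarrow> g \<in> carrier G \<Longrightarrow> a \<in> Bl v \<Longrightarrow> b \<in> Bl v \<Longrightarrow> phil v g a = phil v g b \<longleftrightarrow> a = b"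
  using ga_bij[OF gal] by (meson bij_betw_def inj_on_eq_iff)

lemma tmap_eval: "c' \<in> IM \<Longrightarrow> tmap m Bl (\<lambda>_. RB) M x c' = (\<Sum>c\<in>IT. (\<Prod>v<m. M v (c' v) (c v)) * x c)"
  unfolding tmap_def by simp

lemma x_inv:
  assumes g: "g \<in> carrier G" and c: "c \<in> IT"
  shows "x (gact m phil g c) = x c"
proof -
  have n0: "0 < n" using nk by simp
  have one: "\<one>\<^bsub>G\<^esub> \<in> carrier G" by (simp add: monoid.one_closed[OF Mon])
  define M where "M v p e = (if phil v (fst p) (c v) = e then 1 else (0::'k))" for v and p :: "'g \<times> nat" and e
  have eq: "eqv_mats G m Bl phil (\<lambda>_. RB) (\<lambda>_. regn_action G) M"
    unfolding eqv_mats_def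
  proof (intro allI impI ballI)
    fix v h p e assume v: "v < m" and h: "h \<in> carrier G" and p: "p \<in> RB" and e: "e \<in> Bl v"
    have pf: "fst p \<in> carrier G" using p by (auto simp: regn_basis_def)
    have cv: "c v \<in> Bl v" using c v by auto
    have "phil v (h \<otimes>\<^bsub>G\<^esub> fst p) (c v) = phil v h (phil v (fst p) (c v))"
      by (rule ga_comp[OF gal[OF v] cv h pf])
    then show "M v (regn_action G h p) (phil v h e) = M v p e"
      using phil_inj[OF v h phil_cl[OF v pf cv] e] by (simp add: M_def regn_action_def)
  qed
  define z where "z = tmap m Bl (\<lambda>_. RB) M x"
  have zX: "z \<in> XM" unfolding z_def by (rule H[OF eq])
  define f where "f h = (\<lambda>v::nat. if v < m then (h, 0::nat) else undefined)" for h :: 'g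
  have fIM: "h \<in> carrier G \<Longrightarrow> f h \<in> IM" for h using n0 by (auto simp: f_def regn_basis_def PiE_iff extensional_def)
  have zf: "z (f h) = x (gact m phil h c)" if h: "h \<in> carrier G" for h
  proof -
    have gc: "gact m phil h c \<in> IT" by (rule gact_PiE) (use c h phil_cl in auto)
    have "z (f h) = (\<Sum>c'\<in>IT. (\<Prod>v<m. M v (f h v) (c' v)) * x c')"
      unfolding z_def by (rule tmap_eval[OF fIM[OF h]])
    also have "\<dots> = (\<Sum>c'\<in>IT. (\<Prod>v<m. (if gact m phil h c v = c' v then 1 else 0)) * x c')"
      by (intro sum.cong refl arg_cong2[where f="(*)"] prod.cong) (auto simp: M_def f_def gact_def)
    also have "\<dots> = x (gact m phil h c)" by (rule collapse[OF gc fBl])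
    finally show ?thesis .
  qed
  have gf: "gact m (\<lambda>_. regn_action G) g (f \<one>\<^bsub>G\<^esub>) = f g"
  proof
    fix v show "gact m (\<lambda>_. regn_action G) g (f \<one>\<^bsub>G\<^esub>) v = f g v"
      by (simp add: gact_def f_def regn_action_def monoid.r_one[OF Mon] g)
  qed
  have zz: "z (f g) = z (f \<one>\<^bsub>G\<^esub>)"
    using XM_inv[OF zX g fIM[OF one]] unfolding gf .
  have g1: "gact m phil \<one>\<^bsub>G\<^esub> c = c"
  proof
    fix v show "gact m phil \<one>\<^bsub>G\<^esub> c v = c v"
    proof (cases "v < m")
      case True
      then have "c v \<in> Bl v" using c by auto
      then show ?thesis using True ga_one[OF gal[OF True]] by (simp add: gact_def)
    next
      case False
      then have "c v = undefined" using PiE_arb[OF c, of v] by simp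
      then show ?thesis using False by (simp add: gact_def)
    qed
  qed
  have "x (gact m phil g c) = z (f g)" by (rule zf[OF g, symmetric])
  also have "\<dots> = z (f \<one>\<^bsub>G\<^esub>)" by (rule zz)
  also have "\<dots> = x (gact m phil \<one>\<^bsub>G\<^esub> c)" by (rule zf[OF one])
  also have "\<dots> = x c" unfolding g1 ..
  finally show ?thesis .
qed

lemma minors:
  assumes v: "v < m" and ds: "\<forall>i<Suc k. ds i \<in> Bl v" and cs: "\<forall>j<Suc k. cs j \<in> IT"
  shows "det (mat (Suc k) (Suc k) (\<lambda>(i,j). x ((cs j)(v := ds i)))) = 0"
proof -
  let ?N = "Suc k"
  have Nn: "?N \<le> n" using nk by simp
  have one: "\<one>\<^bsub>G\<^esub> \<in> carrier G" by (simp add: monoid.one_closed[OF Mon])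
  define tgt where "tgt q w = (if w = v then ds q else cs q w)" for q w
  have tgt_in: "q < ?N \<Longrightarrow> w < m \<Longrightarrow> tgt q w \<in> Bl w" for q w
    using ds cs by (auto simp: tgt_def)
  define M where "M w p e = (if snd p < ?N \<and> phil w (fst p) (tgt (snd p) w) = e then 1 else (0::'k))"
    for w and p :: "'g \<times> nat" and e
  have eq: "eqv_mats G m Bl phil (\<lambda>_. RB) (\<lambda>_. regn_action G) M"
    unfolding eqv_mats_def
  proof (intro allI impI ballI)
    fix w h p e assume w: "w < m" and h: "h \<in> carrier G" and p: "p \<in> RB" and e: "e \<in> Bl w"
    have pf: "fst p \<in> carrier G" using p by (auto simp: regn_basis_def)
    show "M w (regn_action G h p) (phil w h e) = M w p e"
    proof (cases "snd p < ?N")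
      case True
      have tw: "tgt (snd p) w \<in> Bl w" by (rule tgt_in[OF True w])
      have "phil w (h \<otimes>\<^bsub>G\<^esub> fst p) (tgt (snd p) w) = phil w h (phil w (fst p) (tgt (snd p) w))"
        by (rule ga_comp[OF gal[OF w] tw h pf])
      then show ?thesis
        using phil_inj[OF w h phil_cl[OF w pf tw] e] True by (simp add: M_def regn_action_def)
    next
      case False then show ?thesis by (simp add: M_def regn_action_def)
    qed
  qed
  define z where "z = tmap m Bl (\<lambda>_. RB) M x"
  have zX: "z \<in> XM" unfolding z_def by (rule H[OF eq])
  define cc where "cc i j = (\<lambda>w::nat. if w < m then (if w = v then (\<one>\<^bsub>G\<^esub>, i) else (\<one>\<^bsub>G\<^esub>, j)) else undefined)"
    for i j :: nat
  have ccIM: "cc i j \<in> IM" if "i < ?N" "j < ?N" for i j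
    using that Nn one by (auto simp: cc_def regn_basis_def PiE_iff extensional_def)
  have zc: "z (cc i j) = x ((cs j)(v := ds i))" if i: "i < ?N" and j: "j < ?N" for i j
  proof -
    have fIT: "(cs j)(v := ds i) \<in> IT" using cs j ds i v by (auto simp: PiE_iff extensional_def)
    have "z (cc i j) = (\<Sum>c\<in>IT. (\<Prod>w<m. M w (cc i j w) (c w)) * x c)"
      unfolding z_def by (rule tmap_eval[OF ccIM[OF i j]])
    also have "\<dots> = (\<Sum>c\<in>IT. (\<Prod>w<m. (if ((cs j)(v := ds i)) w = c w then 1 else 0)) * x c)"
    proof (rule sum.cong[OF refl], rule arg_cong2[where f="(*)"], rule prod.cong[OF refl])
      fix c w assume w: "w \<in> {..<m}"
      have q: "snd (cc i j w) < ?N" using i j w by (simp add: cc_def)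
      have fq: "fst (cc i j w) = \<one>\<^bsub>G\<^esub>" using w by (simp add: cc_def)
      have tq: "tgt (snd (cc i j w)) w = ((cs j)(v := ds i)) w" using w by (simp add: cc_def tgt_def)
      have "phil w (fst (cc i j w)) (tgt (snd (cc i j w)) w) = ((cs j)(v := ds i)) w"
      proof -
        have w': "w < m" using w by simp
        have mem: "((cs j)(v := ds i)) w \<in> Bl w" using PiE_mem[OF fIT] w by simp
        show ?thesis unfolding fq tq by (rule ga_one[OF gal[OF w'] mem])
      qed
      then show "M w (cc i j w) (c w) = (if ((cs j)(v := ds i)) w = c w then 1 else 0)"
        using q by (simp add: M_def)
    qed simp
    also have "\<dots> = x ((cs j)(v := ds i))" by (rule collapse[OF fIT fBl])
    finally show ?thesis .
  qed
  have matEq: "mat ?N ?N (\<lambda>(i,j). x ((cs j)(v := ds i))) = mat ?N ?N (\<lambda>(i,j). z (cc i j))"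
    by (rule eq_matI) (auto simp: zc)
  have "det (mat ?N ?N (\<lambda>(i,j). z (cc i j))) = 0"
  proof (rule pfl_vanish_closure[where f="\<lambda>z. det (mat ?N ?N (\<lambda>(i,j). z (cc i j)))"])
    show "pfl IM ?N (\<lambda>z::(nat \<Rightarrow> 'g \<times> nat) \<Rightarrow> 'k. det (mat ?N ?N (\<lambda>(i,j). z (cc i j))))"
      by (rule pfl_det[OF fIM]) (rule ccIM)
    show "z \<in> zariski_closure IM (star_tensors G Br phir m (\<lambda>_. RB) (\<lambda>_. regn_action G))"
      using zX by (simp add: equivariant_model_def)
    show "star_tensors G Br phir m (\<lambda>_. RB) (\<lambda>_. regn_action G) \<subseteq> aff_space IM" by (rule star_aff)
    fix t :: "(nat \<Rightarrow> 'g \<times> nat) \<Rightarrow> 'k"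
    assume t: "t \<in> star_tensors G Br phir m (\<lambda>_. RB) (\<lambda>_. regn_action G)"
    obtain A where tA: "t = (\<lambda>c. if c \<in> IM then (\<Sum>b\<in>Br. \<Prod>w<m. A w b (c w)) else 0)"
      using t unfolding star_tensors_def by blast
    have tc: "t (cc i j) = (\<Sum>b\<in>Br. A v b (\<one>\<^bsub>G\<^esub>, i) * (\<Prod>w\<in>{..<m} - {v}. A w b (\<one>\<^bsub>G\<^esub>, j)))"
      if i: "i < ?N" and j: "j < ?N" for i j
    proof -
      have "t (cc i j) = (\<Sum>b\<in>Br. \<Prod>w<m. A w b (cc i j w))" using ccIM[OF i j] tA by simp
      also have "\<dots> = (\<Sum>b\<in>Br. A v b (\<one>\<^bsub>G\<^esub>, i) * (\<Prod>w\<in>{..<m} - {v}. A w b (\<one>\<^bsub>G\<^esub>, j)))"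
      proof (rule sum.cong[OF refl])
        fix b
        have "(\<Prod>w<m. A w b (cc i j w)) = A v b (cc i j v) * (\<Prod>w\<in>{..<m} - {v}. A w b (cc i j w))"
          by (rule prod.remove) (use v in auto)
        also have "(\<Prod>w\<in>{..<m} - {v}. A w b (cc i j w)) = (\<Prod>w\<in>{..<m} - {v}. A w b (\<one>\<^bsub>G\<^esub>, j))"
          by (rule prod.cong) (auto simp: cc_def)
        also have "cc i j v = (\<one>\<^bsub>G\<^esub>, i)" using v by (simp add: cc_def)
        finally show "(\<Prod>w<m. A w b (cc i j w)) = A v b (\<one>\<^bsub>G\<^esub>, i) * (\<Prod>w\<in>{..<m} - {v}. A w b (\<one>\<^bsub>G\<^esub>, j))" .
      qed
      finally show ?thesis .
    qed
    have "mat ?N ?N (\<lambda>(i,j). t (cc i j)) =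
        mat ?N ?N (\<lambda>(i,j). \<Sum>b\<in>Br. A v b (\<one>\<^bsub>G\<^esub>, i) * (\<Prod>w\<in>{..<m} - {v}. A w b (\<one>\<^bsub>G\<^esub>, j)))"
      by (rule eq_matI) (auto simp: tc)
    also have "det \<dots> = 0" by (rule det_lowrank[OF fBr]) (simp add: cBr)
    finally show "det (mat ?N ?N (\<lambda>(i,j). t (cc i j))) = 0"
      by (metis (no_types, lifting) \<open>mat ?N ?N (\<lambda>(i,j). t (cc i j)) = _\<close> det_lowrank[OF fBr] cBr lessI)
  qed
  then show ?thesis by (simp add: matEq)
qed

lemma reps: "\<exists>r u L. \<forall>v<m. r v < Suc k \<and> (\<forall>C\<in>IT. \<forall>e\<in>Bl v.
    x (C(v := e)) = (\<Sum>j<r v. (\<Sum>d\<in>Bl v. L v j d * x (C(v := d))) * u v j e))"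
proof -
  have ex: "\<forall>v. \<exists>t. v < m \<longrightarrow> (fst t < Suc k \<and> (\<forall>C\<in>IT. \<forall>e\<in>Bl v.
    x (C(v := e)) = (\<Sum>j<fst t. (\<Sum>d\<in>Bl v. snd (snd t) j d * x (C(v := d))) * fst (snd t) j e)))"
  proof
    fix v show "\<exists>t. v < m \<longrightarrow> (fst t < Suc k \<and> (\<forall>C\<in>IT. \<forall>e\<in>Bl v.
      x (C(v := e)) = (\<Sum>j<fst t. (\<Sum>d\<in>Bl v. snd (snd t) j d * x (C(v := d))) * fst (snd t) j e)))"
    proof (cases "v < m")
      case True
      have "\<exists>r<Suc k. \<exists>u L. \<forall>C\<in>IT. \<forall>e\<in>Bl v. (\<lambda>C e. x (C(v := e))) C e =
          (\<Sum>j<r. (\<Sum>d\<in>Bl v. L j d * (\<lambda>C e. x (C(v := e))) C d) * u j e)"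
        by (rule rank_reprod[OF fBl[OF True]]) (rule minors[OF True], auto)
      then obtain r u L where "r < Suc k" "\<forall>C\<in>IT. \<forall>e\<in>Bl v. x (C(v := e)) =
          (\<Sum>j<r. (\<Sum>d\<in>Bl v. L j d * x (C(v := d))) * u j e)" by auto
      then show ?thesis by (intro exI[of _ "(r, u, L)"]) simp
    qed simp
  qed
  then obtain f where f: "\<forall>v. v < m \<longrightarrow> (fst (f v) < Suc k \<and> (\<forall>C\<in>IT. \<forall>e\<in>Bl v.
    x (C(v := e)) = (\<Sum>j<fst (f v). (\<Sum>d\<in>Bl v. snd (snd (f v)) j d * x (C(v := d))) * fst (snd (f v)) j e)))"
    by (rule choice[THEN exE]) blast
  show ?thesis
    by (rule exI[of _ "\<lambda>v. fst (f v)"], rule exI[of _ "\<lambda>v. fst (snd (f v))"], rule exI[of _ "\<lambda>v. snd (snd (f v))"])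
      (use f in blast)
qed

lemma inv_rel:
  assumes v: "v < m" and g: "g \<in> carrier G" and h: "h \<in> carrier G" and e: "e \<in> Bl v"
  shows "phil v (inv\<^bsub>G\<^esub> (g \<otimes>\<^bsub>G\<^esub> h)) (phil v g e) = phil v (inv\<^bsub>G\<^esub> h) e"
proof -
  have ig: "inv\<^bsub>G\<^esub> g \<in> carrier G" and ih: "inv\<^bsub>G\<^esub> h \<in> carrier G" using g h G by (auto simp: group.inv_closed)
  have "inv\<^bsub>G\<^esub> (g \<otimes>\<^bsub>G\<^esub> h) = inv\<^bsub>G\<^esub> h \<otimes>\<^bsub>G\<^esub> inv\<^bsub>G\<^esub> g"
    using G g h by (simp add: group.inv_mult_group)
  moreover have "phil v (inv\<^bsub>G\<^esub> h \<otimes>\<^bsub>G\<^esub> inv\<^bsub>G\<^esub> g) (phil v g e) = phil v (inv\<^bsub>G\<^esub> h) (phil v (inv\<^bsub>G\<^esub> g) (phil v g e))"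
    by (rule ga_comp[OF gal[OF v] phil_cl[OF v g e] ih ig])
  moreover have "phil v (inv\<^bsub>G\<^esub> g) (phil v g e) = e" by (rule ga_inv1[OF gal[OF v] e g])
  ultimately show ?thesis by simp
qed

end

context dsetup begin

lemma gact_upd:
  assumes v: "v < m" and h: "h \<in> carrier G" and c: "c \<in> IT" and e: "e \<in> Bl v"
  shows "gact m phil (inv\<^bsub>G\<^esub> h) (c(v := phil v h e)) = (gact m phil (inv\<^bsub>G\<^esub> h) c)(v := e)"
proof
  fix w show "gact m phil (inv\<^bsub>G\<^esub> h) (c(v := phil v h e)) w = ((gact m phil (inv\<^bsub>G\<^esub> h) c)(v := e)) w"
    using ga_inv1[OF gal[OF v] e h] v by (simp add: gact_def)
qed

lemma avg:
  fixes r :: "nat \<Rightarrow> nat" and u L :: "nat \<Rightarrow> nat \<Rightarrow> 'b \<Rightarrow> 'k"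
  assumes rk: "\<forall>v<m. r v < Suc k"
    and rep: "\<forall>v<m. \<forall>C\<in>IT. \<forall>e\<in>Bl v. x (C(v := e)) = (\<Sum>j<r v. (\<Sum>d\<in>Bl v. L v j d * x (C(v := d))) * u v j e)"
    and v: "v < m" and c: "c \<in> IT" and d: "d \<in> Bl v"
  defines "cg \<equiv> (of_nat (card (carrier G)) :: 'k)"
  defines "\<phi> \<equiv> \<lambda>v p e. if snd p < r v then L v (snd p) (phil v (inv\<^bsub>G\<^esub> (fst p)) e) / cg else 0"
  defines "\<psi> \<equiv> \<lambda>v e p. if snd p < r v then u v (snd p) (phil v (inv\<^bsub>G\<^esub> (fst p)) e) else 0"
  shows "(\<Sum>e\<in>Bl v. (\<Sum>p\<in>RB. \<psi> v d p * \<phi> v p e) * x (c(v := e))) = x (c(v := d))"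
proof -
  have rn: "r v \<le> n" using rk v nk by auto
  have fB: "finite (Bl v)" by (rule fBl[OF v])
  let ?y = "\<lambda>e. x (c(v := e))"
  have inner: "(\<Sum>e\<in>Bl v. L v i (phil v (inv\<^bsub>G\<^esub> h) e) * ?y e)
      = (\<Sum>e\<in>Bl v. L v i e * x ((gact m phil (inv\<^bsub>G\<^esub> h) c)(v := e)))"
    if h: "h \<in> carrier G" for h i
  proof -
    have ih: "inv\<^bsub>G\<^esub> h \<in> carrier G" using G h by (simp add: group.inv_closed)
    have "(\<Sum>e\<in>Bl v. L v i (phil v (inv\<^bsub>G\<^esub> h) e) * ?y e)
        = (\<Sum>e\<in>Bl v. L v i (phil v (inv\<^bsub>G\<^esub> h) (phil v h e)) * ?y (phil v h e))"
      by (rule ga_sum_reindex[OF gal[OF v] h, symmetric])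
    also have "\<dots> = (\<Sum>e\<in>Bl v. L v i e * x ((gact m phil (inv\<^bsub>G\<^esub> h) c)(v := e)))"
    proof (rule sum.cong[OF refl])
      fix e assume e: "e \<in> Bl v"
      have ce: "c(v := phil v h e) \<in> IT" using c v phil_cl[OF v h e] by (auto simp: PiE_iff extensional_def)
      have "?y (phil v h e) = x (gact m phil (inv\<^bsub>G\<^esub> h) (c(v := phil v h e)))"
        by (rule x_inv[OF ih ce, symmetric])
      also have "\<dots> = x ((gact m phil (inv\<^bsub>G\<^esub> h) c)(v := e))" by (simp only: gact_upd[OF v h c e])
      finally show "L v i (phil v (inv\<^bsub>G\<^esub> h) (phil v h e)) * ?y (phil v h e) = L v i e * x ((gact m phil (inv\<^bsub>G\<^esub> h) c)(v := e))"
        using ga_inv1[OF gal[OF v] e h] by simp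
    qed
    finally show ?thesis .
  qed
  have perh: "(\<Sum>i<n. \<psi> v d (h, i) * (\<Sum>e\<in>Bl v. \<phi> v (h, i) e * ?y e)) = x (c(v := d)) / cg"
    if h: "h \<in> carrier G" for h
  proof -
    have ih: "inv\<^bsub>G\<^esub> h \<in> carrier G" using G h by (simp add: group.inv_closed)
    let ?C = "gact m phil (inv\<^bsub>G\<^esub> h) c"
    have CIT: "?C \<in> IT" by (rule gact_PiE) (use c ih phil_cl in auto)
    have dh: "phil v (inv\<^bsub>G\<^esub> h) d \<in> Bl v" by (rule phil_cl[OF v ih d])
    have "(\<Sum>i<n. \<psi> v d (h, i) * (\<Sum>e\<in>Bl v. \<phi> v (h, i) e * ?y e))
        = (\<Sum>i<r v. \<psi> v d (h, i) * (\<Sum>e\<in>Bl v. \<phi> v (h, i) e * ?y e))"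
      by (rule sum.mono_neutral_right) (use rn in \<open>auto simp: \<psi>_def\<close>)
    also have "\<dots> = (\<Sum>i<r v. u v i (phil v (inv\<^bsub>G\<^esub> h) d) * (\<Sum>e\<in>Bl v. L v i (phil v (inv\<^bsub>G\<^esub> h) e) * ?y e)) / cg"
      unfolding sum_divide_distrib
      by (rule sum.cong[OF refl]) (simp add: \<psi>_def \<phi>_def sum_divide_distrib[symmetric] sum_distrib_left)
    also have "\<dots> = (\<Sum>i<r v. u v i (phil v (inv\<^bsub>G\<^esub> h) d) * (\<Sum>e\<in>Bl v. L v i e * x (?C(v := e)))) / cg"
      by (simp add: inner[OF h])
    also have "(\<Sum>i<r v. u v i (phil v (inv\<^bsub>G\<^esub> h) d) * (\<Sum>e\<in>Bl v. L v i e * x (?C(v := e))))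
        = x (?C(v := phil v (inv\<^bsub>G\<^esub> h) d))"
      using rep v CIT dh by (simp add: mult.commute)
    also have "?C(v := phil v (inv\<^bsub>G\<^esub> h) d) = gact m phil (inv\<^bsub>G\<^esub> h) (c(v := d))"
    proof
      fix w show "(?C(v := phil v (inv\<^bsub>G\<^esub> h) d)) w = gact m phil (inv\<^bsub>G\<^esub> h) (c(v := d)) w"
        using v by (simp add: gact_def)
    qed
    also have "x (gact m phil (inv\<^bsub>G\<^esub> h) (c(v := d))) = x (c(v := d))"
      by (rule x_inv[OF ih]) (use c v d in \<open>auto simp: PiE_iff extensional_def\<close>)
    finally show ?thesis .
  qed
  have "(\<Sum>e\<in>Bl v. (\<Sum>p\<in>RB. \<psi> v d p * \<phi> v p e) * ?y e) = (\<Sum>p\<in>RB. \<psi> v d p * (\<Sum>e\<in>Bl v. \<phi> v p e * ?y e))"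
    by (simp add: sum_distrib_left sum_distrib_right mult.assoc sum.swap[of _ "Bl v"])
  also have "\<dots> = (\<Sum>h\<in>carrier G. \<Sum>i<n. \<psi> v d (h, i) * (\<Sum>e\<in>Bl v. \<phi> v (h, i) e * ?y e))"
    unfolding regn_basis_def by (simp add: sum.cartesian_product case_prod_unfold)
  also have "\<dots> = (\<Sum>h\<in>carrier G. x (c(v := d)) / cg)" by (rule sum.cong[OF refl]) (rule perh)
  also have "\<dots> = x (c(v := d))" using cardG by (simp add: cg_def)
  finally show ?thesis .
qed

lemma detect: "x \<in> equivariant_model G Br phir m Bl phil"
proof -
  obtain r u L where rk: "\<forall>v<m. r v < Suc k"
    and rep: "\<forall>v<m. \<forall>C\<in>IT. \<forall>e\<in>Bl v. x (C(v := e)) = (\<Sum>j<r v. (\<Sum>d\<in>Bl v. L v j d * x (C(v := d))) * u v j e)"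
    using reps by blast
  define cg where "cg = (of_nat (card (carrier G)) :: 'k)"
  define \<phi> where "\<phi> = (\<lambda>v (p :: 'g \<times> nat) e. if snd p < r v then L v (snd p) (phil v (inv\<^bsub>G\<^esub> (fst p)) e) / cg else 0)"
  define \<psi> where "\<psi> = (\<lambda>v e (p :: 'g \<times> nat). if snd p < r v then u v (snd p) (phil v (inv\<^bsub>G\<^esub> (fst p)) e) else 0)"
  have eq\<phi>: "eqv_mats G m Bl phil (\<lambda>_. RB) (\<lambda>_. regn_action G) \<phi>"
    unfolding eqv_mats_def
  proof (intro allI impI ballI)
    fix v g p e assume v: "v < m" and g: "g \<in> carrier G" and p: "p \<in> RB" and e: "e \<in> Bl v"
    have pf: "fst p \<in> carrier G" using p by (auto simp: regn_basis_def)
    show "\<phi> v (regn_action G g p) (phil v g e) = \<phi> v p e"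
      using inv_rel[OF v g pf e] by (simp add: \<phi>_def regn_action_def)
  qed
  have eq\<psi>: "eqv_mats G m (\<lambda>_. RB) (\<lambda>_. regn_action G) Bl phil \<psi>"
    unfolding eqv_mats_def
  proof (intro allI impI ballI)
    fix v g e p assume v: "v < m" and g: "g \<in> carrier G" and e: "e \<in> Bl v" and p: "p \<in> RB"
    have pf: "fst p \<in> carrier G" using p by (auto simp: regn_basis_def)
    show "\<psi> v (phil v g e) (regn_action G g p) = \<psi> v e p"
      using inv_rel[OF v g pf e] by (simp add: \<psi>_def regn_action_def)
  qed
  define y1 where "y1 = tmap m Bl (\<lambda>_. RB) \<phi> x"
  have y1X: "y1 \<in> XM" unfolding y1_def by (rule H[OF eq\<phi>])
  have x'X: "tmap m (\<lambda>_. RB) Bl \<psi> y1 \<in> equivariant_model G Br phir m Bl phil"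
    by (rule tmap_model[OF _ fBl _ eq\<psi> y1X]) (auto intro: fRB regn_bij[OF G])
  define \<pi> where "\<pi> w a b = (\<Sum>p\<in>RB. \<psi> w a p * \<phi> w p b)" for w a b
  have "tmap m (\<lambda>_. RB) Bl \<psi> y1 = x"
  proof
    fix c'
    show "tmap m (\<lambda>_. RB) Bl \<psi> y1 c' = x c'"
    proof (cases "c' \<in> IT")
      case False
      then show ?thesis using xaff by (simp add: tmap_def aff_space_def)
    next
      case True
      have "tmap m (\<lambda>_. RB) Bl \<psi> y1 c' = (\<Sum>c''\<in>IM. (\<Prod>w<m. \<psi> w (c' w) (c'' w)) *
            (\<Sum>c\<in>IT. (\<Prod>w<m. \<phi> w (c'' w) (c w)) * x c))"
        using True unfolding tmap_def y1_def by (simp cong: sum.cong)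
      also have "\<dots> = (\<Sum>c\<in>IT. (\<Sum>c''\<in>IM. \<Prod>w<m. \<psi> w (c' w) (c'' w) * \<phi> w (c'' w) (c w)) * x c)"
        by (simp add: sum_distrib_left sum_distrib_right prod.distrib mult.assoc sum.swap[of _ IT])
      also have "\<dots> = (\<Sum>c\<in>IT. (\<Prod>w<m. \<pi> w (c' w) (c w)) * x c)"
      proof (rule sum.cong[OF refl])
        fix c
        have "(\<Prod>w<m. \<pi> w (c' w) (c w)) = (\<Sum>c''\<in>IM. \<Prod>w<m. \<psi> w (c' w) (c'' w) * \<phi> w (c'' w) (c w))"
          unfolding \<pi>_def by (rule prod_sum_PiE) (auto intro: fRB)
        then show "(\<Sum>c''\<in>IM. \<Prod>w<m. \<psi> w (c' w) (c'' w) * \<phi> w (c'' w) (c w)) * x c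
            = (\<Prod>w<m. \<pi> w (c' w) (c w)) * x c" by simp
      qed
      also have "\<dots> = x c'"
      proof (rule reprod_all[OF fBl _ True])
        fix v c assume v: "v < m" and c: "c \<in> IT"
        have cv: "c v \<in> Bl v" using c v by auto
        have "(\<Sum>e\<in>Bl v. \<pi> v (c v) e * x (c(v := e))) = x (c(v := c v))"
          unfolding \<pi>_def \<phi>_def \<psi>_def cg_def by (rule avg[OF rk rep v c cv])
        then show "(\<Sum>e\<in>Bl v. \<pi> v (c v) e * x (c(v := e))) = x c" by simp
      qed
      finally show ?thesis .
    qed
  qed
  then show ?thesis using x'X by simp
qed

end

theorem lemma6p6:
  fixes G :: "('g, 'z) monoid_scheme"
    and Br :: "'c set" and phir :: "'g \<Rightarrow> 'c \<Rightarrow> 'c"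
    and m :: nat and Bl :: "nat \<Rightarrow> 'b set" and phil :: "nat \<Rightarrow> 'g \<Rightarrow> 'b \<Rightarrow> 'b"
    and k n D :: nat
  assumes "comm_group G" and "finite (carrier G)"
    and "infinite (UNIV :: 'k::field set)"
    and "\<And>d (\<rho> :: 'g \<Rightarrow> nat \<Rightarrow> nat \<Rightarrow> 'k). is_mat_rep G d \<rho> \<Longrightarrow> splits_1dim G d \<rho>"
    and "finite Br" and "card Br = k" and "group_action G Br phir"
    and "\<And>v. v < m \<Longrightarrow> finite (Bl v)"
    and "\<And>v. v < m \<Longrightarrow> group_action G (Bl v) (phil v)"
    and "n > k"
    and "defined_by_deg_le (Pi\<^sub>E {..<m} (\<lambda>_. regn_basis G n))
           (equivariant_model G Br phir m (\<lambda>_. regn_basis G n) (\<lambda>_. regn_action G)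
              :: ((nat \<Rightarrow> 'g \<times> nat) \<Rightarrow> 'k) set) D"
  shows "defined_by_deg_le (Pi\<^sub>E {..<m} Bl)
           (equivariant_model G Br phir m Bl phil :: ((nat \<Rightarrow> 'b) \<Rightarrow> 'k) set) D"
proof -
  note cg = assms(1) and fG = assms(2) and split = assms(4) and fBr = assms(5) and cBr = assms(6)
    and gar = assms(7) and fBl = assms(8) and gal = assms(9) and nk = assms(10) and hyp = assms(11)
  have G: "group G" using cg by (simp add: comm_group_def)
  have cardG: "of_nat (card (carrier G)) \<noteq> (0::'k)" by (rule card_nonzero[OF G fG split])
  let ?IT = "Pi\<^sub>E {..<m} Bl"
  let ?RB = "regn_basis G n"
  let ?IM = "Pi\<^sub>E {..<m} (\<lambda>_::nat. ?RB)"
  let ?XM = "equivariant_model G Br phir m (\<lambda>_. regn_basis G n) (\<lambda>_. regn_action G) :: ((nat \<Rightarrow> 'g \<times> nat) \<Rightarrow> 'k) set"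
  let ?XT = "equivariant_model G Br phir m Bl phil :: ((nat \<Rightarrow> 'b) \<Rightarrow> 'k) set"
  obtain P where Pdeg: "\<forall>p\<in>P. mpoly_deg_le ?IM D p" and XMeq: "?XM = zero_set ?IM P"
    using hyp unfolding defined_by_deg_le_def by blast
  have fRB: "finite ?RB" using fG by (simp add: regn_basis_def)
  have fIM: "finite ?IM" using fRB by (intro finite_PiE) auto
  have bijl: "\<And>v g. v < m \<Longrightarrow> g \<in> carrier G \<Longrightarrow> bij_betw (phil v g) (Bl v) (Bl v)"
    using ga_bij[OF gal] by blast
  define PT where "PT = {q. mpoly_deg_le ?IT D q \<and> (\<exists>p\<in>P. \<exists>M. eqv_mats G m Bl phil (\<lambda>_. ?RB) (\<lambda>_. regn_action G) M
      \<and> (\<forall>y. mpoly_eval ?IT q y = mpoly_eval ?IM p (tmap m Bl (\<lambda>_. ?RB) M y)))}"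
  have "?XT = zero_set ?IT PT"
  proof
    show "?XT \<subseteq> zero_set ?IT PT"
    proof
      fix x assume x: "x \<in> ?XT"
      have xa: "x \<in> aff_space ?IT"
        using closure_aff[OF star_aff[of G Br phir m Bl phil]] x unfolding equivariant_model_def by blast
      have "mpoly_eval ?IT q x = 0" if q: "q \<in> PT" for q
      proof -
        obtain p M where p: "p \<in> P" and eq: "eqv_mats G m Bl phil (\<lambda>_. ?RB) (\<lambda>_. regn_action G) M"
          and ev: "\<forall>y. mpoly_eval ?IT q y = mpoly_eval ?IM p (tmap m Bl (\<lambda>_. ?RB) M y)"
          using q unfolding PT_def by blast
        have "tmap m Bl (\<lambda>_. ?RB) M x \<in> ?XM"
          by (rule tmap_model[OF fBl _ bijl eq x]) (use fRB in auto)
        then have "mpoly_eval ?IM p (tmap m Bl (\<lambda>_. ?RB) M x) = 0"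
          using p XMeq by (auto simp: zero_set_def)
        then show ?thesis using ev by simp
      qed
      then show "x \<in> zero_set ?IT PT" using xa by (simp add: zero_set_def)
    qed
  next
    show "zero_set ?IT PT \<subseteq> ?XT"
    proof
      fix x :: "(nat \<Rightarrow> 'b) \<Rightarrow> 'k" assume x: "x \<in> zero_set ?IT PT"
      have H: "tmap m Bl (\<lambda>_. ?RB) M x \<in> ?XM"
        if eq: "eqv_mats G m Bl phil (\<lambda>_. ?RB) (\<lambda>_. regn_action G) M" for M
      proof -
        have "mpoly_eval ?IM p (tmap m Bl (\<lambda>_. ?RB) M x) = 0" if p: "p \<in> P" for p
        proof -
          have "pfl ?IT D (\<lambda>y. mpoly_eval ?IM p (tmap m Bl (\<lambda>_. ?RB) M y))"
            by (rule mpoly_pfl[OF _ fIM tmap_coord_pfl[OF fBl]]) (use Pdeg p in blast)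
          then obtain q where q: "mpoly_deg_le ?IT D q"
            and qe: "\<And>y. mpoly_eval ?IT q y = mpoly_eval ?IM p (tmap m Bl (\<lambda>_. ?RB) M y)"
            using pfl_mpoly by blast
          have "q \<in> PT" unfolding PT_def using q qe p eq by blast
          then have "mpoly_eval ?IT q x = 0" using x by (simp add: zero_set_def)
          then show ?thesis using qe by simp
        qed
        then show ?thesis unfolding XMeq using tmap_aff by (simp add: zero_set_def)
      qed
      have xa: "x \<in> aff_space ?IT" using x by (simp add: zero_set_def)
      have ds: "dsetup G Br phir m Bl phil k n x"
        by (rule dsetup.intro) (use G fG cardG fBr cBr gar fBl gal nk xa H in auto)
      show "x \<in> ?XT" by (rule dsetup.detect[OF ds])
    qed
  qed
  moreover have "\<forall>q\<in>PT. mpoly_deg_le ?IT D q" unfolding PT_def by blast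
  ultimately show ?thesis unfolding defined_by_deg_le_def by blast
qed

end
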